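(* Let $n\ge d$, $\mathbf X\in\mathbb R^{n\times d}$ a fixed full-column-rank matrix, $1\le k<d$, and suppose $\mathbf y\sim\mathcal N(\mathbf X\boldsymbol\beta,\sigma^2\mathbf I_n)$ with $\boldsymbol\beta_{1:k}=\mathbf 0$ (the hypothesis $H_{1:k}$), $\boldsymbol\beta_{-1:k}\in\mathbb R^{d-k}$ and $\sigma>0$ arbitrary. Let $M\ge1$ and let $\mathbf y^{(1)},\dots,\mathbf y^{(M)}$, $\lambda$, $\tilde{\boldsymbol\beta}^\lambda_{1:k}$ and the statistic $L$ be as in the context. Then for all $\alpha\in[0,1]$, $$\mathbb P\Big(\frac{1}{M+1}\Big(1+\sum_{i=1}^M\mathbf 1\{L(\mathbf y^{(i)})\ge L(\mathbf y)\}\Big)\le\alpha\Big)\le\alpha.$$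
   Context: Notation: $\mathbf A_i$, $\mathbf A_{1:i}$, $\mathbf A_{-1:i}$ denote the $i$-th column, first $i$ columns, and the submatrix with first $i$ columns removed (similarly for vectors). $\mathbf P_{-1:i}$ is the orthogonal projection onto the column space of $\mathbf X_{-1:i}$. $\mathbf V\in\mathbb R^{n\times(n-d+k)}$ has orthonormal columns spanning the orthogonal complement of the column space of $\mathbf X_{-1:k}$, with first $k$ columns $\mathbf V_i=(\mathbf I-\mathbf P_{-1:i})\mathbf X_i/\|(\mathbf I-\mathbf P_{-1:i})\mathbf X_i\|$. Set $\hat{\mathbf y}_{1:k}=\mathbf P_{-1:k}\mathbf y$, $\hat\sigma_{1:k}=\|(\mathbf I-\mathbf P_{-1:k})\mathbf y\|$, $\mathbf u=\mathbf V^T(\mathbf y-\hat{\mathbf y}_{1:k})/\hat\sigma_{1:k}$ (a unit vector with $\mathbf y=\hat{\mathbf y}_{1:k}+\hat\sigma_{1:k}\mathbf V\mathbf u$). Randomization: let $\tilde{\mathbf u},\mathbf u^{(1)},\dots,\mathbf u^{(M)}$ be i.i.d. uniform on the unit sphere $\mathbb S^{n-d+k-1}\subset\mathbb R^{n-d+k}$, independent of $\mathbf y$; set $\tilde{\mathbf y}=\hat{\mathbf y}_{1:k}+\hat\sigma_{1:k}\mathbf V\tilde{\mathbf u}$ and $\mathbf y^{(i)}=\hat{\mathbf y}_{1:k}+\hat\sigma_{1:k}\mathbf V\mathbf u^{(i)}$. The tuning parameter $\lambda>0$ and vector $\tilde{\boldsymbol\beta}^\lambda_{1:k}\in\mathbb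 R^k$ are obtained by applying a fixed (deterministic) cross-validation procedure to $(\tilde{\mathbf y},\mathbf X)$: $\lambda$ is the cross-validated penalty and $\tilde{\boldsymbol\beta}^\lambda_{1:k}$ is the first $k$ coordinates of the group-LASSO estimate $\arg\min_{\boldsymbol\beta}\big(\frac1{2n}\|\tilde{\mathbf y}-\mathbf X\boldsymbol\beta\|_2^2+\lambda(\|\boldsymbol\beta_{1:k}\|_2+\|\boldsymbol\beta_{-1:k}\|_1)\big)$. Statistic: for $\mathbf b\in\mathbb R^k$ let $\hat{\boldsymbol\beta}^\lambda_{-1:k}(\mathbf b)=\arg\min_{\boldsymbol\gamma\in\mathbb R^{d-k}}\big(\frac1{2n}\|\mathbf y-\mathbf X_{1:k}\mathbf b-\mathbf X_{-1:k}\boldsymbol\gamma\|_2^2+\lambda\|\boldsymbol\gamma\|_1\big)$, $\mathcal A(\mathbf b)$ the set of indices in $\{k+1,\dots,d\}$ of its nonzero coefficients, $\mathbf P_{\mathcal A(\mathbf b)}$ the projection onto the span of those columns of $\mathbf X$, $\mathbf S=\mathbf X_{1:k}^T\mathbf V_{1:k}\mathbf V_{1:k}^T\mathbf X_{1:k}$, $\check{\boldsymbol\beta}(\mathbf b)=\mathbf S^{-1}\mathbf X_{1:k}^T\mathbf P_{-1:k}(\mathbf y-\mathbf X_{-1:k}\hat{\boldsymbol\beta}^\lambda_{-1:k}(\mathbf b)-\mathbf P_{\mathcal A(\mathbf b)}\mathbf X_{1:k}\mathbf b)$ and $\boldsymbol\nu=-\frac1{\hat\sigma_{1:k}}\mathbf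 V_{1:k}^T\mathbf X_{1:k}\check{\boldsymbol\beta}(\tilde{\boldsymbol\beta}^\lambda_{1:k})$. With $\tilde{\mathbf b}=\tilde{\boldsymbol\beta}^\lambda_{1:k}$, set $\mathbf A=\hat\sigma_{1:k}\mathbf V_{1:k}^T\mathbf X_{1:k}\big[\mathbf X_{1:k}^T(\mathbf I-\mathbf P_{\mathcal A(\tilde{\mathbf b})})\mathbf X_{1:k}+\frac{n\lambda}{\|\tilde{\mathbf b}\|}\mathbf I\big]^{-1}\mathbf X_{1:k}^T\mathbf V_{1:k}$ if $\tilde{\mathbf b}\ne\mathbf 0$, and $\mathbf A=\frac{\hat\sigma_{1:k}}{n\lambda}\mathbf V_{1:k}^T\mathbf X_{1:k}\mathbf X_{1:k}^T\mathbf V_{1:k}$ if $\tilde{\mathbf b}=\mathbf 0$. Then $L(\mathbf y)=\|\mathbf A(\mathbf u_{1:k}-\boldsymbol\nu)\|$ and $L(\mathbf y^{(i)})=\|\mathbf A(\mathbf u^{(i)}_{1:k}-\boldsymbol\nu)\|$ (with the same $\mathbf A,\boldsymbol\nu$). *)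

theory Defs
  imports "HOL-Probability.Probability"
begin

text \<open>The design matrix is X :: real^('k + 'p)^'n, i.e. n = CARD('n) rows and
  d = CARD('k) + CARD('p) columns; the columns indexed by Inl i (i :: 'k) are the first k
  columns (tested block 1:k, ordered by the linear order on 'k), the columns indexed by Inr q
  are the remaining d - k columns (block -1:k).\<close>

definition gauss_vec :: "'a::euclidean_space \<Rightarrow> real \<Rightarrow> 'a measure" where
  "gauss_vec mu sg = density lborel
     (\<lambda>x. ennreal ((2 * pi * sg\<^sup>2) powr (- real DIM('a) / 2)
                    * exp (- (norm (x - mu))\<^sup>2 / (2 * sg\<^sup>2))))"

text \<open>Uniform distribution (normalized surface measure) on the unit sphere, realised as the
  cone measure: the radial projection of the uniform distribution on the unit ball.\<close>
definition unif_sphere :: "'a::euclidean_space measure" where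
  "unif_sphere = distr (uniform_measure lborel (ball 0 1)) borel (\<lambda>x. x /\<^sub>R norm x)"

text \<open>Joint law of (y, u~, (u^(1),...,u^(M))): all independent.\<close>
definition joint_law ::
  "real^'n::finite \<Rightarrow> real \<Rightarrow> nat \<Rightarrow> ((real^'n) \<times> (real^'m::finite) \<times> (nat \<Rightarrow> real^'m)) measure" where
  "joint_law mu sg M =
     gauss_vec mu sg \<Otimes>\<^sub>M (unif_sphere \<Otimes>\<^sub>M (\<Pi>\<^sub>M i\<in>{1..M}. unif_sphere))"

definition oproj :: "'a::euclidean_space set \<Rightarrow> 'a \<Rightarrow> 'a" where
  "oproj C x = (THE p. p \<in> span C \<and> (\<forall>c\<in>C. inner (x - p) c = 0))"

definition blk1 :: "real^('k::finite + 'p::finite) \<Rightarrow> real^'k" where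
  "blk1 b = (\<chi> i. b $ Inl i)"

definition blk2 :: "real^('k::finite + 'p::finite) \<Rightarrow> real^'p" where
  "blk2 b = (\<chi> q. b $ Inr q)"

definition X1 :: "real^('k::finite + 'p::finite)^'n::finite \<Rightarrow> real^'k^'n" where
  "X1 X = (\<chi> r i. X $ r $ Inl i)"

definition X2 :: "real^('k::finite + 'p::finite)^'n::finite \<Rightarrow> real^'p^'n" where
  "X2 X = (\<chi> r q. X $ r $ Inr q)"

definition cols_after :: "real^('k::{finite,linorder} + 'p::finite)^'n::finite \<Rightarrow> 'k::{finite,linorder} \<Rightarrow> (real^'n) set" where
  "cols_after X i = {column (Inl j) X | j. i < j} \<union> {column (Inr q) X | q. True}"

definition Pk :: "real^('k::finite + 'p::finite)^'n::finite \<Rightarrow> real^'n \<Rightarrow> real^'n" where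
  "Pk X = oproj {column (Inr q) X | q. True}"

definition Vcol :: "real^('k::{finite,linorder} + 'p::finite)^'n::finite \<Rightarrow> 'k::{finite,linorder} \<Rightarrow> real^'n" where
  "Vcol X i = (let w = column (Inl i) X - oproj (cols_after X i) (column (Inl i) X)
               in w /\<^sub>R norm w)"

definition V1 :: "real^('k::{finite,linorder} + 'p::finite)^'n::finite \<Rightarrow> real^'k::{finite,linorder}^'n" where
  "V1 X = (\<chi> r i. Vcol X i $ r)"

definition yhat :: "real^('k::finite + 'p::finite)^'n::finite \<Rightarrow> real^'n \<Rightarrow> real^'n" where
  "yhat X y = Pk X y"

definition sighat :: "real^('k::finite + 'p::finite)^'n::finite \<Rightarrow> real^'n \<Rightarrow> real" where
  "sighat X y = norm (y - yhat X y)"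

definition l1norm :: "real^'p::finite \<Rightarrow> real" where
  "l1norm g = (\<Sum>q\<in>UNIV. \<bar>g $ q\<bar>)"

text \<open>A minimiser of f (the minimisers below are unique since X has full column rank).\<close>
definition argmin :: "('a \<Rightarrow> real) \<Rightarrow> 'a" where
  "argmin f = (SOME x. \<forall>z. f x \<le> f z)"

definition group_lasso ::
  "real^('k::finite + 'p::finite)^'n::finite \<Rightarrow> real^'n \<Rightarrow> real \<Rightarrow> real^('k + 'p)" where
  "group_lasso X y lam = argmin (\<lambda>b. (1 / (2 * real CARD('n))) * (norm (y - X *v b))\<^sup>2
                                   + lam * (norm (blk1 b) + l1norm (blk2 b)))"

definition lasso_rest ::
  "real^('k::finite + 'p::finite)^'n::finite \<Rightarrow> real^'n \<Rightarrow> real \<Rightarrow> real^'k \<Rightarrow> real^'p" where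
  "lasso_rest X y lam b = argmin (\<lambda>g. (1 / (2 * real CARD('n)))
        * (norm (y - X1 X *v b - X2 X *v g))\<^sup>2 + lam * l1norm g)"

definition active ::
  "real^('k::finite + 'p::finite)^'n::finite \<Rightarrow> real^'n \<Rightarrow> real \<Rightarrow> real^'k \<Rightarrow> 'p set" where
  "active X y lam b = {q. lasso_rest X y lam b $ q \<noteq> 0}"

definition PA :: "real^('k::finite + 'p::finite)^'n::finite \<Rightarrow> 'p set \<Rightarrow> real^'n \<Rightarrow> real^'n" where
  "PA X A = oproj {column (Inr q) X | q. q \<in> A}"

definition Smat :: "real^('k::{finite,linorder} + 'p::finite)^'n::finite \<Rightarrow> real^'k::{finite,linorder}^'k::{finite,linorder}" where
  "Smat X = transpose (X1 X) ** V1 X ** transpose (V1 X) ** X1 X"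

definition betacheck ::
  "real^('k::{finite,linorder} + 'p::finite)^'n::finite \<Rightarrow> real^'n \<Rightarrow> real \<Rightarrow> real^'k::{finite,linorder} \<Rightarrow> real^'k::{finite,linorder}" where
  "betacheck X y lam b = matrix_inv (Smat X) *v (transpose (X1 X) *v
      Pk X (y - X2 X *v lasso_rest X y lam b - PA X (active X y lam b) (X1 X *v b)))"

definition nuvec ::
  "real^('k::{finite,linorder} + 'p::finite)^'n::finite \<Rightarrow> real^'n \<Rightarrow> real \<Rightarrow> real^'k::{finite,linorder} \<Rightarrow> real^'k::{finite,linorder}" where
  "nuvec X y lam bt = - ((1 / sighat X y) *\<^sub>R ((transpose (V1 X) ** X1 X) *v betacheck X y lam bt))"

definition resid_X1 ::
  "real^('k::finite + 'p::finite)^'n::finite \<Rightarrow> 'p set \<Rightarrow> real^'k^'n" where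
  "resid_X1 X A = (\<chi> r i. (column i (X1 X) - PA X A (column i (X1 X))) $ r)"

definition Amat ::
  "real^('k::{finite,linorder} + 'p::finite)^'n::finite \<Rightarrow> real^'n \<Rightarrow> real \<Rightarrow> real^'k::{finite,linorder} \<Rightarrow> real^'k::{finite,linorder}^'k::{finite,linorder}" where
  "Amat X y lam bt =
     (if bt \<noteq> 0 then
        sighat X y *\<^sub>R (transpose (V1 X) ** X1 X
          ** matrix_inv (transpose (X1 X) ** resid_X1 X (active X y lam bt)
                          + (real CARD('n) * lam / norm bt) *\<^sub>R mat 1)
          ** transpose (X1 X) ** V1 X)
      else (sighat X y / (real CARD('n) * lam)) *\<^sub>R
          (transpose (V1 X) ** X1 X ** transpose (X1 X) ** V1 X))"

text \<open>L evaluated at a vector w playing the role of u_{1:k}, with A and nu computed from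
  y, lam and the (tilde) coefficient bt.\<close>
definition Lstat ::
  "real^('k::{finite,linorder} + 'p::finite)^'n::finite \<Rightarrow> real^'n \<Rightarrow> real \<Rightarrow> real^'k::{finite,linorder} \<Rightarrow> real^'k::{finite,linorder} \<Rightarrow> real" where
  "Lstat X y lam bt w = norm (Amat X y lam bt *v (w - nuvec X y lam bt))"

text \<open>Given y, u~, the draws u^(1..M), the matrix V, the identification e of the first k
  columns of V, and the cross-validation rule cv (lam = cv y~).\<close>
definition mc_pvalue ::
  "real^('k::{finite,linorder} + 'p::finite)^'n::finite \<Rightarrow> real^'m::finite^'n \<Rightarrow> ('k::{finite,linorder} \<Rightarrow> 'm)
   \<Rightarrow> (real^'n \<Rightarrow> real) \<Rightarrow> nat \<Rightarrow> real^'n \<Rightarrow> real^'m \<Rightarrow> (nat \<Rightarrow> real^'m) \<Rightarrow> real" where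
  "mc_pvalue X V e cv M y ut us =
     (let yh = yhat X y; sh = sighat X y;
          u = (1 / sh) *\<^sub>R (transpose V *v (y - yh));
          yt = yh + sh *\<^sub>R (V *v ut);
          lam = cv yt;
          bt = blk1 (group_lasso X yt lam);
          L0 = Lstat X y lam bt (\<chi> i. u $ e i);
          Li = (\<lambda>j. Lstat X y lam bt (\<chi> i. us j $ e i))
      in (1 + real (card {j \<in> {1..M}. Li j \<ge> L0})) / (real M + 1))"

end

theory Submission
  imports Defs
begin

typedef (overloaded) ('a::euclidean_space) bidx = "{..<DIM('a)}" morphisms bidx_rep Abs_bidx
  by (rule exI[of _ 0]) (simp add: DIM_positive)

instantiation bidx :: (euclidean_space) linorder
begin
definition "less_eq_bidx (x::'a bidx) (y::'a bidx) \<longleftrightarrow> bidx_rep x \<le> bidx_rep y"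
definition "less_bidx (x::'a bidx) (y::'a bidx) \<longleftrightarrow> bidx_rep x < bidx_rep y"
instance by standard (auto simp: less_eq_bidx_def less_bidx_def bidx_rep_inject)
end

instance bidx :: (euclidean_space) wellorder
proof
  fix P :: "'a bidx \<Rightarrow> bool" and a
  assume H: "\<And>x. (\<And>y. y < x \<Longrightarrow> P y) \<Longrightarrow> P x"
  have "\<forall>x. bidx_rep x = n \<longrightarrow> P x" for n
  proof (induction n rule: less_induct)
    case (less n)
    show ?case
    proof (intro allI impI)
      fix x :: "'a bidx" assume x: "bidx_rep x = n"
      show "P x"
      proof (rule H)
        fix y assume "y < x"
        then have "bidx_rep y < n" using x by (simp add: less_bidx_def)
        then show "P y" using less by blast
      qed
    qed
  qed
  then show "P a" by blast
qed

instance bidx :: (euclidean_space) finite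
proof
  have "(UNIV :: 'a bidx set) = Abs_bidx ` {..<DIM('a)}"
    by (rule type_definition.Abs_image[OF type_definition_bidx, symmetric])
  then show "finite (UNIV :: 'a bidx set)" by (metis finite_imageI finite_lessThan)
qed

lemma card_bidx: "CARD('a::euclidean_space bidx) = DIM('a)"
proof -
  have "bij_betw bidx_rep (UNIV :: 'a bidx set) {..<DIM('a)}"
    by (auto simp: bij_betw_def inj_on_def bidx_rep_inject type_definition.Rep_range[OF type_definition_bidx])
  then show ?thesis by (simp add: bij_betw_same_card)
qed

definition benum :: "'a bidx \<Rightarrow> 'a::euclidean_space" where
  "benum = (SOME h. bij_betw h UNIV (Basis::'a set))"

lemma benum_bij: "bij_betw (benum :: 'a bidx \<Rightarrow> 'a::euclidean_space) UNIV Basis"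
proof -
  have "\<exists>h. bij_betw h (UNIV :: 'a bidx set) (Basis::'a set)"
    by (rule finite_same_card_bij) (auto simp: card_bidx)
  then show ?thesis unfolding benum_def by (rule someI_ex)
qed

lemma benum_Basis[simp]: "benum i \<in> Basis"
  using benum_bij by (auto simp: bij_betw_def)

lemma benum_inner: "benum i \<bullet> benum j = (if i = j then 1 else 0)"
  using benum_bij unfolding bij_betw_def inj_on_def
  by (auto simp: inner_Basis)

lemma Basis_benum: "(Basis :: 'a::euclidean_space set) = range benum"
  using benum_bij by (auto simp: bij_betw_def)

definition toV :: "'a::euclidean_space \<Rightarrow> real^'a bidx" where
  "toV x = (\<chi> i. x \<bullet> benum i)"

definition ofV :: "real^'a bidx \<Rightarrow> 'a::euclidean_space" where
  "ofV v = (\<Sum>i\<in>UNIV. (v $ i) *\<^sub>R benum i)"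

lemma ofV_inner: "ofV v \<bullet> benum j = v $ j"
  by (simp add: ofV_def inner_sum_left benum_inner if_distrib cong: if_cong)

lemma toV_ofV[simp]: "toV (ofV v) = v"
  by (simp add: toV_def ofV_inner vec_eq_iff)

lemma ofV_toV[simp]: "ofV (toV x) = x"
proof -
  have "ofV (toV x) = (\<Sum>b\<in>Basis. (x \<bullet> b) *\<^sub>R b)"
    unfolding ofV_def toV_def Basis_benum
    by (subst sum.reindex) (use benum_bij in \<open>auto simp: bij_betw_def\<close>)
  then show ?thesis by (simp add: euclidean_representation)
qed

lemma linear_toV: "linear toV"
  by (auto simp: linear_iff toV_def vec_eq_iff inner_add_left)

lemma linear_ofV: "linear ofV"
  by (auto simp: linear_iff ofV_def scaleR_add_left sum.distrib scaleR_sum_right)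

lemma toV_measurable[measurable]: "toV \<in> borel_measurable borel"
  using linear_toV by (intro borel_measurable_continuous_onI linear_continuous_on) (simp add: linear_conv_bounded_linear)

lemma ofV_measurable[measurable]: "ofV \<in> borel_measurable borel"
  using linear_ofV by (intro borel_measurable_continuous_onI linear_continuous_on) (simp add: linear_conv_bounded_linear)

lemma lborel_toV: "distr lborel borel toV = (lborel :: (real^'a::euclidean_space bidx) measure)"
proof (rule lborel_eqI[symmetric])
  fix l u :: "real^'a bidx"
  assume le: "\<And>b. b \<in> Basis \<Longrightarrow> l \<bullet> b \<le> u \<bullet> b"
  have le': "l $ i \<le> u $ i" for i
  proof -
    have "axis i 1 \<in> (Basis :: (real^'a bidx) set)" by (auto simp: Basis_vec_def)
    from le[OF this] show ?thesis by (simp add: cart_eq_inner_axis)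
  qed
  have pre: "toV -` box l u = box (ofV l) (ofV u :: 'a)"
  proof -
    have "x \<in> toV -` box l u \<longleftrightarrow> (\<forall>i. l $ i < x \<bullet> benum i \<and> x \<bullet> benum i < u $ i)" for x
      by (simp add: mem_box_cart toV_def)
    moreover have "x \<in> box (ofV l) (ofV u :: 'a) \<longleftrightarrow> (\<forall>i. l $ i < x \<bullet> benum i \<and> x \<bullet> benum i < u $ i)" for x
      by (simp add: mem_box Basis_benum[where 'a='a] ofV_inner)
    ultimately show ?thesis by blast
  qed
  have le2: "\<And>b. b \<in> Basis \<Longrightarrow> ofV l \<bullet> b \<le> (ofV u :: 'a) \<bullet> b"
    by (auto simp: Basis_benum[where 'a='a] ofV_inner le')
  have "emeasure (distr lborel borel toV) (box l u) = emeasure lborel (box (ofV l) (ofV u :: 'a))"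
    by (simp add: emeasure_distr pre)
  also have "\<dots> = (\<Prod>b\<in>Basis. (ofV u - ofV l :: 'a) \<bullet> b)"
    using le2 by simp
  also have "\<dots> = (\<Prod>i\<in>UNIV. (u $ i - l $ i))"
    unfolding Basis_benum[where 'a='a]
    by (subst prod.reindex) (use benum_bij in \<open>auto simp: bij_betw_def inner_diff_left ofV_inner\<close>)
  also have "\<dots> = (\<Prod>b\<in>Basis. (u - l) \<bullet> b)"
  proof -
    have B: "(Basis :: (real^'a bidx) set) = (\<lambda>i. axis i 1) ` UNIV" by (auto simp: Basis_vec_def)
    show ?thesis unfolding B
      by (subst prod.reindex) (auto simp: inj_on_def axis_eq_axis inner_axis)
  qed
  finally show "emeasure (distr lborel borel toV) (box l u) = (\<Prod>b\<in>Basis. (u - l) \<bullet> b)" .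
qed simp

lemma emeasure_lebesgue_borel: "S \<in> sets borel \<Longrightarrow> emeasure lebesgue S = emeasure lborel S"
  by (simp add: emeasure_completion main_part_sets)

lemma lborel_orth_vec:
  fixes f :: "real^'w::{finite,wellorder} \<Rightarrow> real^'w::_"
  assumes f: "orthogonal_transformation f"
  shows "distr lborel borel f = lborel"
proof (rule lborel_eqI[symmetric])
  fix l u :: "(real, 'w) vec"
  assume le: "\<And>b. b \<in> Basis \<Longrightarrow> l \<bullet> b \<le> u \<bullet> b"
  have lin: "linear f" using f by (simp add: orthogonal_transformation_linear)
  have fm[measurable]: "f \<in> borel_measurable borel"
    using lin by (intro borel_measurable_continuous_onI linear_continuous_on) (simp add: linear_conv_bounded_linear)
  define g where "g = inv f"
  have g: "orthogonal_transformation g" unfolding g_def using f by (rule orthogonal_transformation_inv)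
  have bij: "bij f" using f by (rule orthogonal_transformation_bij)
  have pre: "f -` box l u = g ` box l u"
    unfolding g_def using bij by (simp add: bij_vimage_eq_inv_image)
  have openpre: "open (f -` box l u)"
    using lin by (intro continuous_open_vimage) (auto simp: linear_continuous_at linear_conv_bounded_linear)
  have "emeasure (distr lborel borel f) (box l u) = emeasure lborel (f -` box l u)"
    by (simp add: emeasure_distr)
  also have "\<dots> = emeasure lebesgue (g ` box l u)"
    using openpre pre by (simp add: emeasure_lebesgue_borel)
  also have "\<dots> = ennreal (measure lebesgue (g ` box l u))"
    by (rule emeasure_eq_measure2) (use g in \<open>simp add: measurable_orthogonal_image lmeasurable_box\<close>)
  also have "\<dots> = ennreal (measure lebesgue (box l u))"
    using g by (simp add: measure_orthogonal_image lmeasurable_box)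
  also have "\<dots> = emeasure lebesgue (box l u)"
    by (rule emeasure_eq_measure2[symmetric]) (simp add: lmeasurable_box)
  also have "\<dots> = emeasure lborel (box l u)"
    by (simp add: emeasure_lebesgue_borel)
  also have "\<dots> = (\<Prod>b\<in>Basis. (u - l) \<bullet> b)"
    using le by simp
  finally show "emeasure (distr lborel borel f) (box l u) = (\<Prod>b\<in>Basis. (u - l) \<bullet> b)" .
qed simp

lemma lborel_isometry:
  fixes L :: "'a::euclidean_space \<Rightarrow> 'a"
  assumes lin: "linear L" and iso: "\<And>x. norm (L x) = norm x"
  shows "distr lborel borel L = lborel"
proof -
  define L' where "L' = toV \<circ> L \<circ> ofV"
  have Lm[measurable]: "L \<in> borel_measurable borel"
    using lin by (intro borel_measurable_continuous_onI linear_continuous_on) (simp add: linear_conv_bounded_linear)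
  have "linear L'" unfolding L'_def
    by (intro linear_compose linear_toV linear_ofV lin)
  moreover have "norm (L' v) = norm v" for v
  proof -
    have n1: "norm (toV x) = norm x" for x :: 'a
    proof -
      have "norm (toV x) ^ 2 = (\<Sum>i\<in>UNIV. (x \<bullet> benum i)^2)"
        by (simp add: toV_def norm_vec_def L2_set_def sum_nonneg)
      also have "\<dots> = (\<Sum>b\<in>Basis. (x \<bullet> b)^2)"
        unfolding Basis_benum[where 'a='a]
        by (subst sum.reindex) (use benum_bij in \<open>auto simp: bij_betw_def\<close>)
      also have "\<dots> = x \<bullet> x"
        by (simp add: euclidean_inner[of x x] power2_eq_square)
      also have "\<dots> = norm x ^ 2"
        by (simp add: dot_square_norm)
      finally show ?thesis by (simp add: power2_eq_iff_nonneg)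
    qed
    have "norm (L' v) = norm (ofV v :: 'a)" by (simp add: L'_def n1 iso)
    also have "\<dots> = norm (toV (ofV v :: 'a))" by (rule n1[symmetric])
    finally show ?thesis by simp
  qed
  ultimately have orth: "orthogonal_transformation L'"
    by (simp add: orthogonal_transformation)
  have L'm[measurable]: "L' \<in> borel_measurable borel" unfolding L'_def by measurable
  have lb: "(lborel :: 'a measure) = distr lborel borel ofV"
  proof -
    have "distr (distr lborel borel toV) borel ofV = distr lborel borel (ofV \<circ> (toV :: 'a \<Rightarrow> _))"
      by (simp add: distr_distr)
    also have "\<dots> = (lborel :: 'a measure)"
      by (simp add: comp_def distr_id2)
    finally show ?thesis by (simp add: lborel_toV)
  qed
  have "distr lborel borel L = distr (distr lborel borel ofV) borel L"
    by (simp add: lb[symmetric])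
  also have "\<dots> = distr lborel borel (L \<circ> ofV)"
    by (simp add: distr_distr)
  also have "L \<circ> ofV = ofV \<circ> L'"
    by (simp add: L'_def fun_eq_iff)
  also have "distr lborel borel (ofV \<circ> L') = distr (distr lborel borel L') borel ofV"
    by (simp add: distr_distr)
  also have "\<dots> = lborel"
    by (simp add: lborel_orth_vec[OF orth] lb[symmetric])
  finally show ?thesis .
qed


definition gdens :: "'a::euclidean_space \<Rightarrow> real \<Rightarrow> 'a \<Rightarrow> real" where
  "gdens mu sg x = (2 * pi * sg\<^sup>2) powr (- real DIM('a) / 2) * exp (- (norm (x - mu))\<^sup>2 / (2 * sg\<^sup>2))"

lemma gauss_vec_gdens: "gauss_vec mu sg = density lborel (\<lambda>x. ennreal (gdens mu sg x))"
  by (simp add: gauss_vec_def gdens_def)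

lemma gdens_nonneg: "0 \<le> gdens mu sg x"
  by (simp add: gdens_def)

lemma gdens_measurable[measurable]: "gdens mu sg \<in> borel_measurable borel"
  unfolding gdens_def[abs_def] by measurable

lemma gdens_prod:
  fixes mu :: "'a::euclidean_space"
  assumes sg: "sg > 0"
  shows "gdens mu sg x = (\<Prod>b\<in>Basis. normal_density (mu \<bullet> b) sg (x \<bullet> b))"
proof -
  define a where "a = 2 * pi * sg\<^sup>2"
  have a: "a > 0" using sg by (simp add: a_def)
  have "(\<Prod>b\<in>Basis. normal_density (mu \<bullet> b) sg (x \<bullet> b))
      = (\<Prod>b\<in>(Basis::'a set). 1 / sqrt a) * (\<Prod>b\<in>Basis. exp (- (x \<bullet> b - mu \<bullet> b)\<^sup>2 / (2 * sg\<^sup>2)))"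
    unfolding normal_density_def a_def by (rule prod.distrib)
  also have "(\<Prod>b\<in>(Basis::'a set). 1 / sqrt a) = a powr (- real DIM('a) / 2)"
  proof -
    have "1 / sqrt a = a powr (- 1 / 2)"
      using a by (simp add: powr_half_sqrt[symmetric] powr_minus_divide)
    then have "(\<Prod>b\<in>(Basis::'a set). 1 / sqrt a) = (a powr (- 1 / 2)) ^ DIM('a)"
      by simp
    also have "\<dots> = a powr (- real DIM('a) / 2)"
      using a by (simp add: powr_power)
    finally show ?thesis .
  qed
  also have "(\<Prod>b\<in>(Basis::'a set). exp (- (x \<bullet> b - mu \<bullet> b)\<^sup>2 / (2 * sg\<^sup>2)))
      = exp (- (norm (x - mu))\<^sup>2 / (2 * sg\<^sup>2))"
  proof -
    have "(norm (x - mu))\<^sup>2 = (\<Sum>b\<in>(Basis::'a set). (x \<bullet> b - mu \<bullet> b)\<^sup>2)"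
    proof -
      have "(norm (x - mu))\<^sup>2 = (x - mu) \<bullet> (x - mu)" by (simp add: dot_square_norm)
      also have "\<dots> = (\<Sum>b\<in>(Basis::'a set). ((x - mu) \<bullet> b) * ((x - mu) \<bullet> b))" by (rule euclidean_inner)
      finally show ?thesis by (simp add: inner_diff_left power2_eq_square)
    qed
    then show ?thesis
      by (simp add: exp_sum[symmetric] sum_negf sum_divide_distrib)
  qed
  finally show ?thesis by (simp add: gdens_def a_def)
qed

lemma gauss_vec_prob:
  fixes mu :: "'a::euclidean_space"
  assumes sg: "sg > 0"
  shows "prob_space (gauss_vec mu sg)"
proof (rule prob_spaceI)
  have "emeasure (gauss_vec mu sg) (space (gauss_vec mu sg)) = (\<integral>\<^sup>+x. ennreal (gdens mu sg x) \<partial>lborel)"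
    by (simp add: gauss_vec_gdens emeasure_density)
  also have "\<dots> = (\<integral>\<^sup>+x. (\<Prod>b\<in>Basis. ennreal (normal_density (mu \<bullet> b) sg (x \<bullet> b))) \<partial>lborel)"
    using sg by (simp add: gdens_prod prod_ennreal normal_density_nonneg)
  also have "\<dots> = (\<Prod>b\<in>(Basis::'a set). (\<integral>\<^sup>+x. ennreal (normal_density (mu \<bullet> b) sg x) \<partial>lborel))"
    by (rule nn_integral_lborel_prod) auto
  also have "\<dots> = 1"
  proof (rule prod.neutral, intro ballI)
    fix b :: 'a
    interpret prob_space "density lborel (\<lambda>x. ennreal (normal_density (mu \<bullet> b) sg x))"
      using sg by (rule prob_space_normal_density)
    show "(\<integral>\<^sup>+x. ennreal (normal_density (mu \<bullet> b) sg x) \<partial>lborel) = 1"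
      using emeasure_space_1 by (simp add: emeasure_density)
  qed
  finally show "emeasure (gauss_vec mu sg) (space (gauss_vec mu sg)) = 1" .
qed

lemma sets_gauss_vec[simp, measurable_cong]: "sets (gauss_vec mu sg) = sets borel"
  by (simp add: gauss_vec_def)

lemma space_gauss_vec[simp]: "space (gauss_vec mu sg) = UNIV"
  by (simp add: gauss_vec_def)

lemma gauss_vec_pair:
  fixes m1 :: "'a::euclidean_space" and m2 :: "'b::euclidean_space"
  assumes sg: "sg > 0"
  shows "gauss_vec m1 sg \<Otimes>\<^sub>M gauss_vec m2 sg = gauss_vec (m1, m2) sg"
proof -
  interpret p2: prob_space "gauss_vec m2 sg" using sg by (rule gauss_vec_prob)
  have "gauss_vec m1 sg \<Otimes>\<^sub>M gauss_vec m2 sg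
      = density (lborel \<Otimes>\<^sub>M lborel) (\<lambda>(x, y). ennreal (gdens m1 sg x) * ennreal (gdens m2 sg y))"
    unfolding gauss_vec_gdens
    by (rule pair_measure_density) (auto simp: gauss_vec_gdens[symmetric] intro: p2.sigma_finite_measure_axioms sigma_finite_lborel)
  also have "\<dots> = density lborel (\<lambda>z. ennreal (gdens (m1, m2) sg z))"
  proof -
    have "ennreal (gdens m1 sg x) * ennreal (gdens m2 sg y) = ennreal (gdens (m1, m2) sg (x, y))" for x y
    proof -
      have "gdens m1 sg x * gdens m2 sg y = gdens (m1, m2) sg (x, y)"
        unfolding gdens_def
        by (simp add: norm_Pair powr_add[symmetric] exp_add[symmetric] add_divide_distrib
                 algebra_simps diff_divide_distrib)
      then show ?thesis by (metis ennreal_mult gdens_nonneg)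
    qed
    then show ?thesis by (simp add: lborel_prod split_beta')
  qed
  finally show ?thesis by (simp add: gauss_vec_gdens)
qed

lemma gauss_vec_isometry:
  fixes L :: "'a::euclidean_space \<Rightarrow> 'a"
  assumes lin: "linear L" and iso: "\<And>x. norm (L x) = norm x" and fix_mu: "L mu = mu"
  shows "distr (gauss_vec mu sg) borel L = gauss_vec mu sg"
proof (rule measure_eqI)
  have Lm[measurable]: "L \<in> borel_measurable borel"
    using lin by (intro borel_measurable_continuous_onI linear_continuous_on) (simp add: linear_conv_bounded_linear)
  show "sets (distr (gauss_vec mu sg) borel L) = sets (gauss_vec mu sg)" by simp
  fix A assume "A \<in> sets (distr (gauss_vec mu sg) borel L)"
  then have A[measurable]: "A \<in> sets borel" by simp
  have g: "gdens mu sg (L x) = gdens mu sg x" for x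
  proof -
    have "L x - mu = L (x - mu)" using fix_mu lin by (simp add: linear_diff)
    then show ?thesis by (simp add: gdens_def iso)
  qed
  have "emeasure (distr (gauss_vec mu sg) borel L) A = emeasure (gauss_vec mu sg) (L -` A)"
    by (simp add: emeasure_distr)
  also have "\<dots> = (\<integral>\<^sup>+x. ennreal (gdens mu sg (L x)) * indicator A (L x) \<partial>lborel)"
  proof -
    have pre: "L -` A \<in> sets lborel" using measurable_sets[OF Lm A] by simp
    have "emeasure (gauss_vec mu sg) (L -` A) = (\<integral>\<^sup>+x. ennreal (gdens mu sg x) * indicator (L -` A) x \<partial>lborel)"
      unfolding gauss_vec_gdens by (rule emeasure_density) (use pre in auto)
    then show ?thesis by (simp add: g indicator_vimage)
  qed
  also have "\<dots> = (\<integral>\<^sup>+y. ennreal (gdens mu sg y) * indicator A y \<partial>distr lborel borel L)"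
    by (simp add: nn_integral_distr)
  also have "\<dots> = emeasure (gauss_vec mu sg) A"
    unfolding lborel_isometry[OF lin iso] gauss_vec_gdens by (rule emeasure_density[symmetric]) auto
  finally show "emeasure (distr (gauss_vec mu sg) borel L) A = emeasure (gauss_vec mu sg) A" .
qed


lemma sets_unif_sphere[simp, measurable_cong]: "sets (unif_sphere :: 'a::euclidean_space measure) = sets borel"
  by (simp add: unif_sphere_def)

lemma space_unif_sphere[simp]: "space (unif_sphere :: 'a::euclidean_space measure) = UNIV"
  by (simp add: unif_sphere_def)

lemma ball_pos: "emeasure lborel (ball (0::'a::euclidean_space) 1) \<noteq> 0"
proof -
  have "\<not> negligible (ball (0::'a) 1)" by (rule open_not_negligible) auto
  then have "emeasure lebesgue (ball (0::'a) 1) \<noteq> 0"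
    using negligible_iff_emeasure0[of "ball (0::'a) 1"] by auto
  then show ?thesis by (simp add: emeasure_lebesgue_borel)
qed

lemma ball_fin: "emeasure lborel (ball (0::'a::euclidean_space) 1) \<noteq> \<infinity>"
  by (rule less_imp_neq[OF emeasure_lborel_ball_finite])

lemma unif_sphere_prob: "prob_space (unif_sphere :: 'a::euclidean_space measure)"
proof -
  interpret prob_space "uniform_measure lborel (ball (0::'a) 1)"
    by (rule prob_space_uniform_measure) (use ball_pos ball_fin in auto)
  show ?thesis unfolding unif_sphere_def
    by (rule prob_space_distr) measurable
qed

lemma unif_sphere_AE: "AE w in (unif_sphere :: 'a::euclidean_space measure). norm w = 1"
proof -
  have "AE x in uniform_measure lborel (ball (0::'a) 1). x \<noteq> 0"
  proof (rule AE_uniform_measureI)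
    show "ball (0::'a) 1 \<in> sets lborel" by simp
    show "AE x in lborel. x \<in> ball (0::'a) 1 \<longrightarrow> x \<noteq> 0"
      using AE_lborel_singleton[of "0::'a"] by (rule AE_mp) (rule AE_I2, blast)
  qed
  then have "AE x in uniform_measure lborel (ball (0::'a) 1). norm (x /\<^sub>R norm x) = 1"
    by (rule AE_mp) (rule AE_I2, simp)
  moreover have "{x::'a. norm x = 1} \<in> sets borel" by measurable
  ultimately show ?thesis unfolding unif_sphere_def
    by (subst AE_distr_iff) (auto simp del: sets_lborel)
qed

definition cone :: "'a::euclidean_space set \<Rightarrow> 'a set" where
  "cone D = (\<lambda>x. x /\<^sub>R norm x) -` D"

lemma cone_sets[measurable]: "D \<in> sets borel \<Longrightarrow> cone D \<in> sets borel"
  unfolding cone_def using measurable_sets[of "\<lambda>x::'a. x /\<^sub>R norm x" borel borel D] by simp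

lemma emeasure_unif_sphere:
  assumes D: "D \<in> sets borel"
  shows "emeasure (unif_sphere :: 'a::euclidean_space measure) D
       = emeasure lborel (cone D \<inter> ball 0 1) / emeasure lborel (ball (0::'a) 1)"
proof -
  have m: "(\<lambda>x::'a. x /\<^sub>R norm x) -` D \<in> sets lborel" using cone_sets[OF D] by (simp add: cone_def)
  show ?thesis unfolding unif_sphere_def using D m
    by (simp add: emeasure_distr emeasure_uniform_measure cone_def Int_commute)
qed

lemma dir_scale: "c > 0 \<Longrightarrow> (c *\<^sub>R x) /\<^sub>R norm (c *\<^sub>R x) = x /\<^sub>R (norm x :: real)"
  by (cases "x = 0") auto

lemma cone_scale:
  assumes t: "t > 0"
  shows "cone D \<inter> ball 0 t = (\<lambda>x. t *\<^sub>R x + 0) ` (cone D \<inter> ball (0::'a::euclidean_space) 1)"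
proof
  show "cone D \<inter> ball 0 t \<subseteq> (\<lambda>x. t *\<^sub>R x + 0) ` (cone D \<inter> ball 0 1)"
  proof
    fix x assume x: "x \<in> cone D \<inter> ball 0 t"
    have i: "inverse t > 0" using t by simp
    have "x /\<^sub>R t \<in> cone D"
      unfolding cone_def vimage_def mem_Collect_eq by (subst dir_scale[OF i]) (use x in \<open>simp add: cone_def\<close>)
    moreover have "norm (x /\<^sub>R t) < 1"
    proof -
      have "norm (x /\<^sub>R t) = norm x / t" using t by (simp add: divide_inverse_commute)
      then show ?thesis using x t by (simp add: divide_less_eq)
    qed
    moreover have "x = t *\<^sub>R (x /\<^sub>R t) + 0" using t by simp
    ultimately show "x \<in> (\<lambda>x. t *\<^sub>R x + 0) ` (cone D \<inter> ball 0 1)"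
      by (intro image_eqI[of _ _ "x /\<^sub>R t"]) auto
  qed
  show "(\<lambda>x. t *\<^sub>R x + 0) ` (cone D \<inter> ball 0 1) \<subseteq> cone D \<inter> ball 0 t"
  proof
    fix y assume "y \<in> (\<lambda>x. t *\<^sub>R x + 0) ` (cone D \<inter> ball (0::'a) 1)"
    then obtain x where x: "x \<in> cone D" "norm x < 1" and y: "y = t *\<^sub>R x" by auto
    have "y \<in> cone D" unfolding y cone_def vimage_def mem_Collect_eq
      by (subst dir_scale[OF t]) (use x in \<open>simp add: cone_def\<close>)
    moreover have "norm y < t" using x t y by simp
    ultimately show "y \<in> cone D \<inter> ball 0 t" by simp
  qed
qed

lemma ball_scale:
  assumes t: "t > 0"
  shows "ball 0 t = (\<lambda>x. t *\<^sub>R x + 0) ` (ball (0::'a::euclidean_space) 1)"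
  using cone_scale[OF t, of UNIV] by (simp add: cone_def)

lemma radial_measure:
  fixes D :: "'a::euclidean_space set"
  assumes D[measurable]: "D \<in> sets borel"
  shows "distr (density lborel (indicator (cone D))) borel norm
       = density (distr (lborel :: 'a measure) borel norm) (\<lambda>_. emeasure unif_sphere D)"
proof (rule measure_eqI_generator_eq[where E="range lessThan" and \<Omega>=UNIV and A="\<lambda>i. {..< real i}"])
  show "Int_stable (range lessThan :: real set set)"
    unfolding Int_stable_def
  proof (intro ballI)
    fix A B :: "real set" assume "A \<in> range lessThan" "B \<in> range lessThan"
    then obtain a b where "A = {..<a}" "B = {..<b}" by auto
    then show "A \<inter> B \<in> range lessThan"
      by (intro range_eqI[of _ _ "min a b"]) auto
  qed
  show "range lessThan \<subseteq> Pow (UNIV :: real set)" by simp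
  show "sets (distr (density lborel (indicator (cone D))) borel norm) = sigma_sets UNIV (range lessThan)"
    by (simp add: borel_Iio)
  show "sets (density (distr (lborel :: 'a measure) borel norm) (\<lambda>_. emeasure unif_sphere D)) = sigma_sets UNIV (range lessThan)"
    by (simp add: borel_Iio)
  show "range (\<lambda>i::nat. {..< real i}) \<subseteq> range lessThan" by auto
  show "(\<Union>i. {..< real i}) = (UNIV :: real set)"
    by (auto intro: reals_Archimedean2)
  have pre: "norm -` {..<t} = ball (0::'a) t" for t by auto
  have LHS: "emeasure (distr (density lborel (indicator (cone D))) borel norm) {..<t} = emeasure lborel (cone D \<inter> ball 0 t)" for t
    by (simp add: emeasure_distr pre emeasure_restricted)
  show "emeasure (distr (density lborel (indicator (cone D))) borel norm) {..< real i} \<noteq> \<infinity>" for i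
  proof -
    have "emeasure lborel (cone D \<inter> ball (0::'a) (real i)) \<le> emeasure lborel (ball (0::'a) (real i))"
      by (rule emeasure_mono) auto
    then show ?thesis using emeasure_lborel_ball_finite[of "0::'a" "real i"] by (auto simp: LHS top_unique)
  qed
  fix X :: "real set" assume "X \<in> range lessThan"
  then obtain t where X: "X = {..<t}" by auto
  have RHS: "emeasure (density (distr (lborel :: 'a measure) borel norm) (\<lambda>_. emeasure unif_sphere D)) {..<t}
      = emeasure unif_sphere D * emeasure lborel (ball (0::'a) t)"
    by (simp add: emeasure_density_const emeasure_distr pre)
  show "emeasure (distr (density lborel (indicator (cone D))) borel norm) X =
        emeasure (density (distr (lborel :: 'a measure) borel norm) (\<lambda>_. emeasure unif_sphere D)) X"
  proof (cases "t > 0")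
    case False
    then have e: "ball (0::'a) t = {}" by auto
    show ?thesis unfolding X LHS RHS e by simp
  next
    case True
    have scl: "emeasure lborel (S \<inter> ball 0 t) = ennreal (t ^ DIM('a)) * emeasure lborel (S \<inter> ball (0::'a) 1)"
      if S: "S \<in> sets borel" and Sc: "(\<lambda>x. t *\<^sub>R x + 0) ` (S \<inter> ball (0::'a) 1) = S \<inter> ball 0 t" for S
    proof -
      have "emeasure lborel (S \<inter> ball 0 t) = emeasure lebesgue (S \<inter> ball 0 t)"
        using S by (simp add: emeasure_lebesgue_borel)
      also have "\<dots> = emeasure lebesgue ((\<lambda>x. t *\<^sub>R x + 0) ` (S \<inter> ball (0::'a) 1))"
        by (simp only: Sc)
      also have "\<dots> = ennreal (\<bar>t\<bar> ^ DIM('a)) * emeasure lebesgue (S \<inter> ball (0::'a) 1)"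
        by (rule emeasure_lebesgue_affine)
      also have "\<dots> = ennreal (t ^ DIM('a)) * emeasure lborel (S \<inter> ball (0::'a) 1)"
        using S True by (simp add: emeasure_lebesgue_borel)
      finally show ?thesis .
    qed
    have sc: "emeasure lborel (cone D \<inter> ball 0 t) = ennreal (t ^ DIM('a)) * emeasure lborel (cone D \<inter> ball (0::'a) 1)"
      by (rule scl) (auto simp: cone_scale[OF True])
    have sb: "emeasure lborel (ball (0::'a) t) = ennreal (t ^ DIM('a)) * emeasure lborel (ball (0::'a) 1)"
      using scl[of UNIV] ball_scale[OF True, symmetric] by simp
    have "emeasure unif_sphere D * emeasure lborel (ball (0::'a) t)
        = ennreal (t ^ DIM('a)) * (emeasure lborel (cone D \<inter> ball 0 1) / emeasure lborel (ball (0::'a) 1) * emeasure lborel (ball (0::'a) 1))"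
      by (simp add: emeasure_unif_sphere[OF D] sb ac_simps)
    also have "\<dots> = ennreal (t ^ DIM('a)) * emeasure lborel (cone D \<inter> ball (0::'a) 1)"
    proof -
      have "emeasure lborel (ball (0::'a) 1) / emeasure lborel (ball (0::'a) 1) = 1"
        using ball_pos ball_fin by (intro ennreal_divide_self) (auto simp: top.not_eq_extremum)
      then show ?thesis by (simp add: ennreal_divide_times)
    qed
    finally show ?thesis unfolding X LHS RHS sc by simp
  qed
qed

lemma radial_integral:
  fixes D :: "'a::euclidean_space set" and h :: "real \<Rightarrow> ennreal"
  assumes D[measurable]: "D \<in> sets borel" and h[measurable]: "h \<in> borel_measurable borel"
  shows "(\<integral>\<^sup>+x. h (norm x) * indicator (cone D) x \<partial>(lborel :: 'a measure))
       = emeasure unif_sphere D * (\<integral>\<^sup>+x. h (norm x) \<partial>(lborel :: 'a measure))"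
proof -
  have "(\<integral>\<^sup>+x. h (norm x) * indicator (cone D) x \<partial>(lborel :: 'a measure))
      = (\<integral>\<^sup>+x. h (norm x) \<partial>density lborel (indicator (cone D)))"
    by (simp add: nn_integral_density mult.commute)
  also have "\<dots> = (\<integral>\<^sup>+r. h r \<partial>distr (density lborel (indicator (cone D))) borel norm)"
    by (simp add: nn_integral_distr)
  also have "\<dots> = (\<integral>\<^sup>+r. h r \<partial>density (distr (lborel :: 'a measure) borel norm) (\<lambda>_. emeasure unif_sphere D))"
    by (simp add: radial_measure[OF D])
  also have "\<dots> = (\<integral>\<^sup>+r. emeasure unif_sphere D * h r \<partial>distr (lborel :: 'a measure) borel norm)"
    by (simp add: nn_integral_density)
  also have "\<dots> = emeasure unif_sphere D * (\<integral>\<^sup>+r. h r \<partial>distr (lborel :: 'a measure) borel norm)"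
    by (simp add: nn_integral_cmult)
  also have "\<dots> = emeasure unif_sphere D * (\<integral>\<^sup>+x. h (norm x) \<partial>(lborel :: 'a measure))"
    by (simp add: nn_integral_distr)
  finally show ?thesis .
qed


lemma gdens0: "gdens 0 sg x = (2 * pi * sg\<^sup>2) powr (- real DIM('a) / 2) * exp (- (norm (x::'a::euclidean_space))\<^sup>2 / (2 * sg\<^sup>2))"
  by (simp add: gdens_def)

lemma polar_distr:
  assumes sg: "sg > 0"
  shows "distr (gauss_vec (0::'a::euclidean_space) sg) (borel \<Otimes>\<^sub>M borel) (\<lambda>x. (norm x, x /\<^sub>R norm x))
       = distr (gauss_vec (0::'a) sg) borel norm \<Otimes>\<^sub>M unif_sphere"
proof -
  interpret G: prob_space "gauss_vec (0::'a) sg" using sg by (rule gauss_vec_prob)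
  interpret R: prob_space "distr (gauss_vec (0::'a) sg) borel norm" by (rule G.prob_space_distr) simp
  interpret U: prob_space "unif_sphere :: 'a measure" by (rule unif_sphere_prob)
  have eq: "distr (gauss_vec (0::'a) sg) borel norm \<Otimes>\<^sub>M unif_sphere = distr (gauss_vec (0::'a) sg) (borel \<Otimes>\<^sub>M borel) (\<lambda>x. (norm x, x /\<^sub>R norm x))"
  proof (rule pair_measure_eqI)
  show "sigma_finite_measure (distr (gauss_vec (0::'a) sg) borel norm)" by unfold_locales
  show "sigma_finite_measure (unif_sphere :: 'a measure)" by unfold_locales
  show "sets (distr (gauss_vec (0::'a) sg) borel norm \<Otimes>\<^sub>M unif_sphere) =
        sets (distr (gauss_vec (0::'a) sg) (borel \<Otimes>\<^sub>M borel) (\<lambda>x. (norm x, x /\<^sub>R norm x)))"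
    by (simp cong: sets_pair_measure_cong)
  fix A B assume "A \<in> sets (distr (gauss_vec (0::'a) sg) borel norm)" "B \<in> sets (unif_sphere :: 'a measure)"
  then have A[measurable]: "A \<in> sets borel" and B[measurable]: "B \<in> sets borel" by auto
  define h where "h r = ennreal ((2 * pi * sg\<^sup>2) powr (- real DIM('a) / 2) * exp (- r\<^sup>2 / (2 * sg\<^sup>2))) * indicator A r" for r :: real
  have hm[measurable]: "h \<in> borel_measurable borel" unfolding h_def by measurable
  have pre: "(\<lambda>x::'a. (norm x, x /\<^sub>R norm x)) -` (A \<times> B) = norm -` A \<inter> cone B"
    by (auto simp: cone_def)
  have "emeasure (distr (gauss_vec (0::'a) sg) (borel \<Otimes>\<^sub>M borel) (\<lambda>x. (norm x, x /\<^sub>R norm x))) (A \<times> B)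
      = emeasure (gauss_vec (0::'a) sg) (norm -` A \<inter> cone B)"
    by (subst emeasure_distr) (auto simp: pre)
  also have "\<dots> = (\<integral>\<^sup>+x. h (norm x) * indicator (cone B) x \<partial>(lborel :: 'a measure))"
    unfolding gauss_vec_gdens
    by (subst emeasure_density) (auto intro!: nn_integral_cong simp: h_def gdens0 split: split_indicator)
  also have "\<dots> = emeasure unif_sphere B * (\<integral>\<^sup>+x. h (norm x) \<partial>(lborel :: 'a measure))"
    by (rule radial_integral) auto
  also have "(\<integral>\<^sup>+x. h (norm x) \<partial>(lborel :: 'a measure)) = emeasure (distr (gauss_vec (0::'a) sg) borel norm) A"
  proof -
    have nA: "norm -` A \<in> sets (lborel :: 'a measure)" using measurable_sets[OF borel_measurable_norm A] by simp
    have "emeasure (distr (gauss_vec (0::'a) sg) borel norm) A = emeasure (gauss_vec (0::'a) sg) (norm -` A)"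
      by (subst emeasure_distr) auto
    also have "\<dots> = (\<integral>\<^sup>+x. ennreal (gdens 0 sg x) * indicator (norm -` A) x \<partial>(lborel :: 'a measure))"
      unfolding gauss_vec_gdens by (rule emeasure_density) (use nA in auto)
    also have "\<dots> = (\<integral>\<^sup>+x. h (norm x) \<partial>(lborel :: 'a measure))"
      by (auto intro!: nn_integral_cong simp: h_def gdens0 split: split_indicator)
    finally show ?thesis by simp
  qed
  finally show "emeasure (distr (gauss_vec (0::'a) sg) borel norm) A * emeasure unif_sphere B =
         emeasure (distr (gauss_vec (0::'a) sg) (borel \<Otimes>\<^sub>M borel) (\<lambda>x. (norm x, x /\<^sub>R norm x))) (A \<times> B)"
    by (simp add: mult.commute)
  qed
  then show ?thesis by simp
qed

lemma polar_integral:
  fixes f :: "real \<times> 'a::euclidean_space \<Rightarrow> ennreal"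
  assumes sg: "sg > 0" and f[measurable]: "f \<in> borel_measurable (borel \<Otimes>\<^sub>M borel)"
  shows "(\<integral>\<^sup>+x. f (norm x, x /\<^sub>R norm x) \<partial>gauss_vec (0::'a) sg)
       = (\<integral>\<^sup>+r. \<integral>\<^sup>+\<theta>. f (r, \<theta>) \<partial>unif_sphere \<partial>distr (gauss_vec (0::'a) sg) borel norm)"
proof -
  interpret U: prob_space "unif_sphere :: 'a measure" by (rule unif_sphere_prob)
  have "(\<integral>\<^sup>+x. f (norm x, x /\<^sub>R norm x) \<partial>gauss_vec (0::'a) sg)
      = (\<integral>\<^sup>+z. f z \<partial>distr (gauss_vec (0::'a) sg) (borel \<Otimes>\<^sub>M borel) (\<lambda>x. (norm x, x /\<^sub>R norm x)))"
    by (subst nn_integral_distr) auto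
  also have "\<dots> = (\<integral>\<^sup>+z. f z \<partial>(distr (gauss_vec (0::'a) sg) borel norm \<Otimes>\<^sub>M unif_sphere))"
    by (simp add: polar_distr[OF sg])
  also have "\<dots> = (\<integral>\<^sup>+r. \<integral>\<^sup>+\<theta>. f (r, \<theta>) \<partial>unif_sphere \<partial>distr (gauss_vec (0::'a) sg) borel norm)"
    by (rule U.nn_integral_fst[symmetric]) simp
  finally show ?thesis .
qed

lemma swap_polar:
  fixes f :: "'a::euclidean_space \<times> 'a \<Rightarrow> ennreal"
  assumes sg: "sg > 0" and f[measurable]: "f \<in> borel_measurable (borel \<Otimes>\<^sub>M borel)"
  shows "(\<integral>\<^sup>+z. f (norm (fst z) *\<^sub>R snd z, fst z /\<^sub>R norm (fst z)) \<partial>(gauss_vec (0::'a) sg \<Otimes>\<^sub>M unif_sphere))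
       = (\<integral>\<^sup>+z. f z \<partial>(gauss_vec (0::'a) sg \<Otimes>\<^sub>M unif_sphere))"
proof -
  interpret U: prob_space "unif_sphere :: 'a measure" by (rule unif_sphere_prob)
  interpret UU: pair_sigma_finite "unif_sphere :: 'a measure" "unif_sphere :: 'a measure" by unfold_locales
  let ?R = "distr (gauss_vec (0::'a) sg) borel norm"
  have "(\<integral>\<^sup>+z. f (norm (fst z) *\<^sub>R snd z, fst z /\<^sub>R norm (fst z)) \<partial>(gauss_vec (0::'a) sg \<Otimes>\<^sub>M unif_sphere))
      = (\<integral>\<^sup>+g. \<integral>\<^sup>+w. f (norm g *\<^sub>R w, g /\<^sub>R norm g) \<partial>unif_sphere \<partial>gauss_vec (0::'a) sg)"
    using U.nn_integral_fst[of "\<lambda>(g, w). f (norm g *\<^sub>R w, g /\<^sub>R norm g)" "gauss_vec (0::'a) sg"]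
    by (simp add: split_beta')
  also have "\<dots> = (\<integral>\<^sup>+r. \<integral>\<^sup>+\<theta>. \<integral>\<^sup>+w. f (r *\<^sub>R w, \<theta>) \<partial>unif_sphere \<partial>unif_sphere \<partial>?R)"
    using polar_integral[OF sg, of "\<lambda>(r, \<theta>). \<integral>\<^sup>+w. f (r *\<^sub>R w, \<theta>) \<partial>unif_sphere"] by simp
  also have "\<dots> = (\<integral>\<^sup>+r. \<integral>\<^sup>+w. \<integral>\<^sup>+\<theta>. f (r *\<^sub>R w, \<theta>) \<partial>unif_sphere \<partial>unif_sphere \<partial>?R)"
  proof (rule nn_integral_cong)
    fix r :: real
    show "(\<integral>\<^sup>+\<theta>. \<integral>\<^sup>+w. f (r *\<^sub>R w, \<theta>) \<partial>unif_sphere \<partial>unif_sphere) = (\<integral>\<^sup>+w. \<integral>\<^sup>+\<theta>. f (r *\<^sub>R w, \<theta>) \<partial>unif_sphere \<partial>unif_sphere)"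
      using UU.Fubini[of "\<lambda>(w, \<theta>). f (r *\<^sub>R w, \<theta>)"] by simp
  qed
  also have "\<dots> = (\<integral>\<^sup>+g. \<integral>\<^sup>+w. f (norm g *\<^sub>R (g /\<^sub>R norm g), w) \<partial>unif_sphere \<partial>gauss_vec (0::'a) sg)"
    using polar_integral[OF sg, of "\<lambda>(r, \<theta>). \<integral>\<^sup>+w. f (r *\<^sub>R \<theta>, w) \<partial>unif_sphere"] by simp
  also have "\<dots> = (\<integral>\<^sup>+g. \<integral>\<^sup>+w. f (g, w) \<partial>unif_sphere \<partial>gauss_vec (0::'a) sg)"
  proof -
    have "norm g *\<^sub>R (g /\<^sub>R norm g) = g" for g :: 'a by (cases "g = 0") auto
    then show ?thesis by simp
  qed
  also have "\<dots> = (\<integral>\<^sup>+z. f z \<partial>(gauss_vec (0::'a) sg \<Otimes>\<^sub>M unif_sphere))"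
    by (rule U.nn_integral_fst) simp
  finally show ?thesis .
qed


declare transpose_matrix_vector[simp del]

lemma mv_inner: "(A *v x) \<bullet> y = x \<bullet> (transpose A *v (y :: real^'n::finite))"
  for A :: "real^'m::finite^'n"
  unfolding inner_vec_def matrix_vector_mult_def transpose_def
  by (simp add: sum_distrib_left sum_distrib_right ac_simps) (rule sum.swap)

locale vsetup =
  fixes X :: "real^('k::{finite,linorder} + 'p::finite)^'n::finite"
    and V :: "real^'m::finite^'n"
  assumes V_orth: "transpose V ** V = mat 1"
    and V_span: "range (\<lambda>c. V *v c) = {x. \<forall>q. inner (column (Inr q) X) x = 0}"
begin

definition "CC = {column (Inr q) X | q. True}"

definition Pp :: "real^'n \<Rightarrow> real^'n" where
  "Pp y = y - V *v (transpose V *v y)"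

lemma VtV[simp]: "transpose V *v (V *v t) = t"
  by (simp add: matrix_vector_mul_assoc V_orth)

lemma norm_V[simp]: "norm (V *v t) = norm t"
proof -
  have "(V *v t) \<bullet> (V *v t) = t \<bullet> t" by (simp add: mv_inner)
  then show ?thesis by (simp add: norm_eq_sqrt_inner)
qed

lemma V_orth_C: "c \<in> CC \<Longrightarrow> (V *v t) \<bullet> c = 0"
proof -
  assume "c \<in> CC"
  then obtain q where c: "c = column (Inr q) X" by (auto simp: CC_def)
  have "V *v t \<in> range (\<lambda>c. V *v c)" by simp
  then show ?thesis unfolding V_span c by (simp add: inner_commute)
qed

lemma V_orth_span: "c \<in> span CC \<Longrightarrow> (V *v t) \<bullet> c = 0"
  using orthogonal_to_span[of c CC "V *v t"] V_orth_C by (auto simp: orthogonal_def)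

lemma Vt_span: "c \<in> span CC \<Longrightarrow> transpose V *v c = 0"
proof -
  assume c: "c \<in> span CC"
  have "(transpose V *v c) \<bullet> (transpose V *v c) = 0"
    using V_orth_span[OF c, of "transpose V *v c"] by (simp add: mv_inner)
  then show ?thesis by simp
qed

lemma W_range: "(\<forall>c\<in>CC. z \<bullet> c = 0) \<Longrightarrow> \<exists>t. z = V *v t"
proof -
  assume "\<forall>c\<in>CC. z \<bullet> c = 0"
  then have "z \<in> {x. \<forall>q. inner (column (Inr q) X) x = 0}" by (auto simp: CC_def inner_commute)
  then show ?thesis unfolding V_span[symmetric] by auto
qed

lemma Pp_span: "Pp y \<in> span CC"
proof -
  obtain a z where a: "a \<in> span CC" and z: "\<And>w. w \<in> span CC \<Longrightarrow> orthogonal z w" and y: "y = a + z"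
    by (rule orthogonal_subspace_decomp_exists[where S=CC and x=y]) blast
  have "\<forall>c\<in>CC. z \<bullet> c = 0" using z by (auto simp: orthogonal_def span_base)
  then obtain t where t: "z = V *v t" using W_range by blast
  have "transpose V *v y = t" using y t Vt_span[OF a] by (simp add: matrix_vector_right_distrib)
  then have "Pp y = a" by (simp add: Pp_def y t)
  then show ?thesis using a by simp
qed

lemma Pp_orth: "c \<in> CC \<Longrightarrow> (y - Pp y) \<bullet> c = 0"
  by (simp add: Pp_def V_orth_C)

lemma Pk_eq: "Pk X = Pp"
proof
  fix y
  have "oproj CC y = Pp y"
    unfolding oproj_def
  proof (rule the_equality)
    show "Pp y \<in> span CC \<and> (\<forall>c\<in>CC. (y - Pp y) \<bullet> c = 0)" using Pp_span Pp_orth by auto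
    fix p assume p: "p \<in> span CC \<and> (\<forall>c\<in>CC. (y - p) \<bullet> c = 0)"
    have d: "p - Pp y \<in> span CC" using p Pp_span by (simp add: span_diff)
    have "\<forall>c\<in>CC. (p - Pp y) \<bullet> c = 0"
    proof
      fix c assume c: "c \<in> CC"
      have "(p - Pp y) = (y - Pp y) - (y - p)" by simp
      then show "(p - Pp y) \<bullet> c = 0" using p Pp_orth[OF c] c by (simp add: inner_diff_left)
    qed
    then have "orthogonal (p - Pp y) (p - Pp y)"
      using orthogonal_to_span[OF d, of "p - Pp y"] by (auto simp: orthogonal_def)
    then show "p = Pp y" by (simp add: orthogonal_def)
  qed
  then show "Pk X y = Pp y" by (simp add: Pk_def CC_def)
qed

lemma Pp_linear: "linear Pp"
  unfolding Pp_def by (intro linear_compose_sub linear_id[unfolded id_def] linear_compose[unfolded o_def, OF matrix_vector_mul_linear matrix_vector_mul_linear]) 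

lemma Vt_Pp[simp]: "transpose V *v Pp y = 0"
  by (simp add: Pp_def matrix_vector_right_distrib[symmetric] matrix_vector_mult_diff_distrib)

lemma Pp_V[simp]: "Pp (V *v t) = 0"
  by (simp add: Pp_def)

lemma Pp_add_V: "Pp (y + V *v t) = Pp y"
  by (simp add: Pp_def matrix_vector_right_distrib)

lemma Pp_Pp[simp]: "Pp (Pp y) = Pp y"
  by (simp add: Pp_def matrix_vector_mult_diff_distrib)

lemma decomp: "y = Pp y + V *v (transpose V *v y)"
  by (simp add: Pp_def)

lemma norm_decomp: "(norm y)\<^sup>2 = (norm (Pp y))\<^sup>2 + (norm (transpose V *v y))\<^sup>2"
proof -
  have o: "Pp y \<bullet> (V *v t) = 0" for t by (subst inner_commute) (simp add: mv_inner)
  have e: "Pp y + V *v (transpose V *v y) = y" by (simp add: Pp_def)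
  have "(norm y)\<^sup>2 = (norm (Pp y + V *v (transpose V *v y)))\<^sup>2"
    by (simp only: e)
  also have "\<dots> = (norm (Pp y))\<^sup>2 + (norm (V *v (transpose V *v y)))\<^sup>2"
    by (rule norm_add_Pythagorean) (simp add: orthogonal_def o)
  finally show ?thesis by simp
qed

definition Sw :: "(real^'n) \<times> (real^'m) \<Rightarrow> (real^'n) \<times> (real^'m)" where
  "Sw z = (Pp (fst z) + V *v snd z, transpose V *v fst z)"

lemma Sw_linear: "linear Sw"
proof -
  have lP: "linear Pp" by (rule Pp_linear)
  show ?thesis unfolding linear_iff Sw_def
    using linear_add[OF lP] linear_scale[OF lP]
    by (auto simp: matrix_vector_right_distrib matrix_vector_mult_scaleR scaleR_right_distrib)
qed

lemma Sw_norm: "norm (Sw z) = norm z"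
proof -
  obtain y g where z: "z = (y, g)" by (cases z)
  have o: "Pp y \<bullet> (V *v t) = 0" for t by (subst inner_commute) (simp add: mv_inner)
  have "(norm (Pp y + V *v g))\<^sup>2 = (norm (Pp y))\<^sup>2 + (norm g)\<^sup>2"
    using norm_decomp[of "Pp y + V *v g"] by (simp add: Pp_add_V matrix_vector_right_distrib)
  then have "(norm (Sw z))\<^sup>2 = (norm z)\<^sup>2"
    using norm_decomp[of y] by (simp add: Sw_def z norm_Pair)
  then show ?thesis by (simp add: power2_eq_iff_nonneg)
qed

lemma Sw_measurable[measurable]: "Sw \<in> borel_measurable borel"
  using Sw_linear by (intro borel_measurable_continuous_onI linear_continuous_on) (simp add: linear_conv_bounded_linear)

lemma Sw_fix: "mu \<in> span CC \<Longrightarrow> Sw (mu, 0) = (mu, 0)"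
  using Vt_span[of mu] by (simp add: Sw_def Pp_def)

lemma Sw_inv:
  assumes mu: "mu \<in> span CC" and sg: "sg > 0"
    and f[measurable]: "f \<in> borel_measurable (borel \<Otimes>\<^sub>M borel)"
  shows "(\<integral>\<^sup>+z. f (Sw z) \<partial>(gauss_vec mu sg \<Otimes>\<^sub>M gauss_vec 0 sg))
       = (\<integral>\<^sup>+z. f z \<partial>(gauss_vec mu sg \<Otimes>\<^sub>M gauss_vec (0::real^'m) sg))"
proof -
  have eq: "gauss_vec mu sg \<Otimes>\<^sub>M gauss_vec (0::real^'m) sg = gauss_vec (mu, 0) sg"
    by (rule gauss_vec_pair[OF sg])
  have fb[measurable]: "f \<in> borel_measurable borel"
    using f by (simp add: borel_prod)
  have "(\<integral>\<^sup>+z. f (Sw z) \<partial>gauss_vec (mu, 0) sg) = (\<integral>\<^sup>+z. f z \<partial>distr (gauss_vec (mu, 0) sg) borel Sw)"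
    by (subst nn_integral_distr) auto
  also have "distr (gauss_vec (mu, 0::real^'m) sg) borel Sw = gauss_vec (mu, 0) sg"
    by (rule gauss_vec_isometry[OF Sw_linear Sw_norm Sw_fix[OF mu]])
  finally show ?thesis by (simp add: eq)
qed

end


context vsetup
begin

definition Sm :: "(real^'n) \<times> (real^'m) \<Rightarrow> (real^'n) \<times> (real^'m)" where
  "Sm z = (Pp (fst z) + norm (transpose V *v fst z) *\<^sub>R (V *v snd z),
           (transpose V *v fst z) /\<^sub>R norm (transpose V *v fst z))"

lemma Pp_measurable[measurable]: "Pp \<in> borel_measurable borel"
  using Pp_linear by (intro borel_measurable_continuous_onI linear_continuous_on) (simp add: linear_conv_bounded_linear)

lemma Vt_measurable[measurable]: "(\<lambda>y. transpose V *v y) \<in> borel_measurable borel"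
  by (intro borel_measurable_continuous_onI linear_continuous_on) (simp add: matrix_vector_mul_bounded_linear)

lemma Vm_measurable[measurable]: "(\<lambda>y. V *v y) \<in> borel_measurable borel"
  by (intro borel_measurable_continuous_onI linear_continuous_on) (simp add: matrix_vector_mul_bounded_linear)

lemma Sm_measurable[measurable]: "Sm \<in> (borel \<Otimes>\<^sub>M borel) \<rightarrow>\<^sub>M (borel \<Otimes>\<^sub>M borel)"
  unfolding Sm_def by measurable

lemma S_inv:
  assumes mu: "mu \<in> span CC" and sg: "sg > 0"
    and f[measurable]: "f \<in> borel_measurable (borel \<Otimes>\<^sub>M borel)"
  shows "(\<integral>\<^sup>+z. f (Sm z) \<partial>(gauss_vec mu sg \<Otimes>\<^sub>M (unif_sphere :: (real^'m) measure)))
       = (\<integral>\<^sup>+z. f z \<partial>(gauss_vec mu sg \<Otimes>\<^sub>M (unif_sphere :: (real^'m) measure)))"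
proof -
  interpret N: prob_space "gauss_vec mu sg" using sg by (rule gauss_vec_prob)
  interpret G: prob_space "gauss_vec (0::real^'m) sg" using sg by (rule gauss_vec_prob)
  interpret U: prob_space "unif_sphere :: (real^'m) measure" by (rule unif_sphere_prob)
  let ?N = "gauss_vec mu sg" and ?G = "gauss_vec (0::real^'m) sg" and ?U = "unif_sphere :: (real^'m) measure"
  define F where "F y = (\<integral>\<^sup>+w. f (Sm (y, w)) \<partial>?U)" for y
  define H where "H y = (\<integral>\<^sup>+w. f (y, w) \<partial>?U)" for y
  have Fm[measurable]: "F \<in> borel_measurable borel" unfolding F_def by measurable
  have Hm[measurable]: "H \<in> borel_measurable borel" unfolding H_def by measurable
  have GU: "emeasure ?G UNIV = 1" using G.emeasure_space_1 by simp
  have "(\<integral>\<^sup>+z. f (Sm z) \<partial>(?N \<Otimes>\<^sub>M ?U)) = (\<integral>\<^sup>+y. F y \<partial>?N)"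
    unfolding F_def using U.nn_integral_fst[of "\<lambda>z. f (Sm z)" ?N] by simp
  also have "\<dots> = (\<integral>\<^sup>+y. \<integral>\<^sup>+g. F y \<partial>?G \<partial>?N)" by (simp add: GU)
  also have "\<dots> = (\<integral>\<^sup>+z. F (fst z) \<partial>(?N \<Otimes>\<^sub>M ?G))"
    using G.nn_integral_fst[of "\<lambda>z. F (fst z)" ?N] by simp
  also have "\<dots> = (\<integral>\<^sup>+z. F (fst (Sw z)) \<partial>(?N \<Otimes>\<^sub>M ?G))"
    by (rule Sw_inv[OF mu sg, of "\<lambda>z. F (fst z)", symmetric]) simp
  also have "\<dots> = (\<integral>\<^sup>+y. \<integral>\<^sup>+g. F (Pp y + V *v g) \<partial>?G \<partial>?N)"
    using G.nn_integral_fst[of "\<lambda>z. F (fst (Sw z))" ?N] by (simp add: Sw_def)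
  also have "\<dots> = (\<integral>\<^sup>+y. \<integral>\<^sup>+g. H (Pp y + V *v g) \<partial>?G \<partial>?N)"
  proof (rule nn_integral_cong)
    fix y
    define h where "h z = f (Pp y + V *v fst z, snd z)" for z
    have hm[measurable]: "h \<in> borel_measurable (borel \<Otimes>\<^sub>M borel)" unfolding h_def by measurable
    have Fe: "F (Pp y + V *v g) = (\<integral>\<^sup>+w. h (norm g *\<^sub>R w, g /\<^sub>R norm g) \<partial>?U)" for g
      unfolding F_def h_def
      by (simp add: Sm_def Pp_add_V matrix_vector_right_distrib matrix_vector_mult_scaleR)
    have "(\<integral>\<^sup>+g. F (Pp y + V *v g) \<partial>?G) = (\<integral>\<^sup>+z. h (norm (fst z) *\<^sub>R snd z, fst z /\<^sub>R norm (fst z)) \<partial>(?G \<Otimes>\<^sub>M ?U))"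
      unfolding Fe using U.nn_integral_fst[of "\<lambda>z. h (norm (fst z) *\<^sub>R snd z, fst z /\<^sub>R norm (fst z))" ?G] by simp
    also have "\<dots> = (\<integral>\<^sup>+z. h z \<partial>(?G \<Otimes>\<^sub>M ?U))"
      by (rule swap_polar[OF sg hm])
    also have "\<dots> = (\<integral>\<^sup>+g. H (Pp y + V *v g) \<partial>?G)"
      unfolding H_def h_def using U.nn_integral_fst[of "\<lambda>z. f (Pp y + V *v fst z, snd z)" ?G] by simp
    finally show "(\<integral>\<^sup>+g. F (Pp y + V *v g) \<partial>?G) = (\<integral>\<^sup>+g. H (Pp y + V *v g) \<partial>?G)" .
  qed
  also have "\<dots> = (\<integral>\<^sup>+z. H (fst (Sw z)) \<partial>(?N \<Otimes>\<^sub>M ?G))"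
    using G.nn_integral_fst[of "\<lambda>z. H (fst (Sw z))" ?N] by (simp add: Sw_def)
  also have "\<dots> = (\<integral>\<^sup>+z. H (fst z) \<partial>(?N \<Otimes>\<^sub>M ?G))"
    by (rule Sw_inv[OF mu sg, of "\<lambda>z. H (fst z)"]) simp
  also have "\<dots> = (\<integral>\<^sup>+y. \<integral>\<^sup>+g. H y \<partial>?G \<partial>?N)"
    using G.nn_integral_fst[of "\<lambda>z. H (fst z)" ?N] by simp
  also have "\<dots> = (\<integral>\<^sup>+y. H y \<partial>?N)" by (simp add: GU)
  also have "\<dots> = (\<integral>\<^sup>+z. f z \<partial>(?N \<Otimes>\<^sub>M ?U))"
    unfolding H_def using U.nn_integral_fst[of f ?N] by simp
  finally show ?thesis .
qed

lemma AE_Vt_nz: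
  assumes mu: "mu \<in> span CC" and sg: "sg > 0"
  shows "AE y in gauss_vec mu sg. transpose V *v y \<noteq> 0"
proof -
  interpret N: prob_space "gauss_vec mu sg" using sg by (rule gauss_vec_prob)
  interpret G: prob_space "gauss_vec (0::real^'m) sg" using sg by (rule gauss_vec_prob)
  let ?N = "gauss_vec mu sg" and ?G = "gauss_vec (0::real^'m) sg"
  define Z where "Z = {y. transpose V *v y = 0}"
  have Zm[measurable]: "Z \<in> sets borel" unfolding Z_def by measurable
  have G0: "emeasure ?G {0} = 0"
  proof -
    have "emeasure ?G {0} = (\<integral>\<^sup>+x. ennreal (gdens 0 sg x) * indicator {0} x \<partial>(lborel :: (real^'m) measure))"
      unfolding gauss_vec_gdens by (rule emeasure_density) auto
    also have "\<dots> = 0"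
      by (rule nn_integral_0_iff_AE[THEN iffD2]) (auto intro: AE_mp[OF AE_lborel_singleton[of 0]] simp: indicator_def)
    finally show ?thesis .
  qed
  have "emeasure ?N Z = (\<integral>\<^sup>+y. indicator Z y \<partial>?N)" by simp
  also have "\<dots> = (\<integral>\<^sup>+y. \<integral>\<^sup>+g. indicator Z y \<partial>?G \<partial>?N)" using G.emeasure_space_1 by simp
  also have "\<dots> = (\<integral>\<^sup>+z. indicator Z (fst z) \<partial>(?N \<Otimes>\<^sub>M ?G))"
    using G.nn_integral_fst[of "\<lambda>z. indicator Z (fst z)" ?N] by simp
  also have "\<dots> = (\<integral>\<^sup>+z. indicator Z (fst (Sw z)) \<partial>(?N \<Otimes>\<^sub>M ?G))"
    by (rule Sw_inv[OF mu sg, of "\<lambda>z. indicator Z (fst z)", symmetric]) simp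
  also have "\<dots> = (\<integral>\<^sup>+y. \<integral>\<^sup>+g. indicator {0} g \<partial>?G \<partial>?N)"
    using G.nn_integral_fst[of "\<lambda>z. indicator Z (fst (Sw z))" ?N]
    by (simp add: Sw_def Z_def Pp_add_V matrix_vector_right_distrib indicator_def)
  also have "\<dots> = 0" by (simp add: G0)
  finally have "emeasure ?N Z = 0" .
  then have "Z \<in> null_sets ?N" using Zm by (auto simp: null_sets_def)
  then have "AE y in ?N. y \<notin> Z" using AE_iff_null_sets[of Z ?N] Zm by simp
  then show ?thesis by (simp add: Z_def)
qed

end


lemma norm_add_sq: "(norm (a + d))\<^sup>2 = (norm a)\<^sup>2 + 2 * (a \<bullet> d) + (norm d)\<^sup>2"
  for a d :: "'a::real_inner"
proof -
  have "(norm (a + d))\<^sup>2 = a \<bullet> a + a \<bullet> d + (a \<bullet> d + d \<bullet> d)"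
    by (simp only: power2_norm_eq_inner inner_add_left inner_add_right inner_commute[of d a])
  then show ?thesis by (simp add: power2_norm_eq_inner)
qed

context vsetup
begin

lemma yhat_eq: "yhat X y = Pp y"
  by (simp add: yhat_def Pk_eq)

lemma sighat_eq: "sighat X y = norm (transpose V *v y)"
proof -
  have "y - Pp y = V *v (transpose V *v y)" by (simp add: Pp_def)
  then show ?thesis by (simp add: sighat_def yhat_eq)
qed

lemma X2_span: "X2 X *v g \<in> span CC"
proof -
  have "columns (X2 X) \<subseteq> CC"
    by (auto simp: columns_def CC_def column_def X2_def)
  then show ?thesis using matrix_vector_mult_in_columnspace[of "X2 X" g] span_mono by blast
qed

lemma lasso_rest_inv:
  assumes P: "Pp y' = Pp y"
  shows "lasso_rest X y' = lasso_rest X y"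
proof (intro ext)
  fix lam b
  define d where "d = y' - y"
  have d: "d = V *v (transpose V *v y' - transpose V *v y)"
    using decomp[of y] decomp[of y'] P unfolding d_def
    by (metis (no_types, lifting) add_diff_cancel_left matrix_vector_mult_diff_distrib)
  have K: "(norm (y' - X1 X *v b - X2 X *v g))\<^sup>2
        = (norm (y - X1 X *v b - X2 X *v g))\<^sup>2 + (2 * ((y - X1 X *v b) \<bullet> d) + (norm d)\<^sup>2)" for g
  proof -
    have o: "(X2 X *v g) \<bullet> d = 0"
      unfolding d by (subst inner_commute) (rule V_orth_span[OF X2_span])
    have e: "y' - X1 X *v b - X2 X *v g = (y - X1 X *v b - X2 X *v g) + d" by (simp add: d_def algebra_simps)
    have "(norm (y' - X1 X *v b - X2 X *v g))\<^sup>2 = (norm ((y - X1 X *v b - X2 X *v g) + d))\<^sup>2"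
      by (simp only: e)
    also have "\<dots> = (norm (y - X1 X *v b - X2 X *v g))\<^sup>2 + 2 * ((y - X1 X *v b - X2 X *v g) \<bullet> d) + (norm d)\<^sup>2"
      by (rule norm_add_sq)
    also have "(y - X1 X *v b - X2 X *v g) \<bullet> d = (y - X1 X *v b) \<bullet> d"
      using o by (simp add: inner_diff_left)
    finally show ?thesis by (simp add: add.assoc)
  qed
  define c where "c = 2 * ((y - X1 X *v b) \<bullet> d) + (norm d)\<^sup>2"
  have "(\<lambda>x. \<forall>z. (1 / (2 * real CARD('n))) * (norm (y' - X1 X *v b - X2 X *v x))\<^sup>2 + lam * l1norm x
                 \<le> (1 / (2 * real CARD('n))) * (norm (y' - X1 X *v b - X2 X *v z))\<^sup>2 + lam * l1norm z)
      = (\<lambda>x. \<forall>z. (1 / (2 * real CARD('n))) * (norm (y - X1 X *v b - X2 X *v x))\<^sup>2 + lam * l1norm x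
                 \<le> (1 / (2 * real CARD('n))) * (norm (y - X1 X *v b - X2 X *v z))\<^sup>2 + lam * l1norm z)"
    unfolding K c_def[symmetric] by (simp add: algebra_simps)
  then show "lasso_rest X y' lam b = lasso_rest X y lam b"
    unfolding lasso_rest_def argmin_def by simp
qed

lemma Lstat_inv:
  assumes P: "Pp y' = Pp y" and N: "norm (transpose V *v y') = norm (transpose V *v y)"
  shows "Lstat X y' = Lstat X y"
proof -
  have sh: "sighat X y' = sighat X y" using N by (simp add: sighat_eq)
  have lr: "lasso_rest X y' = lasso_rest X y" using P by (rule lasso_rest_inv)
  have ac: "active X y' = active X y" by (simp add: active_def[abs_def] lr)
  have bc: "betacheck X y' = betacheck X y"
  proof (intro ext)
    fix lam b
    have pk: "Pk X (y' - w) = Pk X (y - w)" for w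
      using linear_diff[OF Pp_linear, of y' w] linear_diff[OF Pp_linear, of y w] P by (simp add: Pk_eq)
    show "betacheck X y' lam b = betacheck X y lam b"
      by (simp add: betacheck_def lr ac diff_diff_eq pk)
  qed
  show ?thesis
    by (intro ext) (simp add: Lstat_def nuvec_def Amat_def sh bc ac)
qed

end


lemma upd_meas:
  assumes j: "j \<in> I" and f: "f \<in> M \<rightarrow>\<^sub>M PiM (I - {j}) (\<lambda>_. U)" and g: "g \<in> M \<rightarrow>\<^sub>M U"
  shows "(\<lambda>\<omega>. (f \<omega>)(j := g \<omega>)) \<in> M \<rightarrow>\<^sub>M PiM I (\<lambda>_. U)"
  by (rule measurable_fun_upd[OF _ f g]) (use j in auto)

lemma Q_rearr:
  fixes N :: "'a measure" and U :: "'b measure"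
  assumes N: "prob_space N" and U: "prob_space U" and j: "j \<in> I" and I: "finite I"
    and h[measurable]: "h \<in> borel_measurable (N \<Otimes>\<^sub>M (U \<Otimes>\<^sub>M PiM I (\<lambda>_. U)))"
  shows "(\<integral>\<^sup>+\<omega>. h \<omega> \<partial>(N \<Otimes>\<^sub>M (U \<Otimes>\<^sub>M PiM I (\<lambda>_. U))))
       = (\<integral>\<^sup>+ut. \<integral>\<^sup>+x. \<integral>\<^sup>+z. h (fst z, ut, x(j := snd z)) \<partial>(N \<Otimes>\<^sub>M U) \<partial>PiM (I - {j}) (\<lambda>_. U) \<partial>U)"
proof -
  interpret N: prob_space N by (rule N)
  interpret U: prob_space U by (rule U)
  interpret P: product_prob_space "\<lambda>_. U" by unfold_locales
  let ?P = "PiM I (\<lambda>_. U)" and ?PI = "PiM (I - {j}) (\<lambda>_. U)"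
  have sfP: "sigma_finite_measure ?P" by (rule prob_space_imp_sigma_finite, rule prob_space_PiM, rule U)
  interpret PI: prob_space ?PI by (rule prob_space_PiM) (rule U)
  interpret UP: prob_space "U \<Otimes>\<^sub>M ?P" by (rule prob_space_pair) unfold_locales
  interpret NU: pair_sigma_finite N U by unfold_locales
  interpret NPI: pair_sigma_finite N ?PI by unfold_locales
  have ins: "insert j (I - {j}) = I" using j by auto
  have upd[measurable (raw)]: "(\<lambda>\<omega>. (f \<omega>)(j := g \<omega>)) \<in> M \<rightarrow>\<^sub>M ?P"
    if "f \<in> M \<rightarrow>\<^sub>M ?PI" "g \<in> M \<rightarrow>\<^sub>M U" for M :: "'c measure" and f g
    by (rule upd_meas[OF j that])
  have "(\<integral>\<^sup>+\<omega>. h \<omega> \<partial>(N \<Otimes>\<^sub>M (U \<Otimes>\<^sub>M ?P))) = (\<integral>\<^sup>+y. \<integral>\<^sup>+v. h (y, v) \<partial>(U \<Otimes>\<^sub>M ?P) \<partial>N)"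
    by (rule UP.nn_integral_fst[symmetric]) simp
  also have "\<dots> = (\<integral>\<^sup>+y. \<integral>\<^sup>+ut. \<integral>\<^sup>+us. h (y, ut, us) \<partial>?P \<partial>U \<partial>N)"
    by (rule nn_integral_cong, rule sigma_finite_measure.nn_integral_fst[OF sfP, symmetric]) simp
  also have "\<dots> = (\<integral>\<^sup>+y. \<integral>\<^sup>+ut. \<integral>\<^sup>+x. \<integral>\<^sup>+w. h (y, ut, x(j := w)) \<partial>U \<partial>?PI \<partial>U \<partial>N)"
  proof (intro nn_integral_cong)
    fix y ut assume yN[measurable]: "y \<in> space N" and utU[measurable]: "ut \<in> space U"
    have "(\<integral>\<^sup>+us. h (y, ut, us) \<partial>PiM (insert j (I - {j})) (\<lambda>_. U))
        = (\<integral>\<^sup>+x. \<integral>\<^sup>+w. h (y, ut, x(j := w)) \<partial>U \<partial>?PI)"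
      by (rule P.product_nn_integral_insert) (use I j in \<open>auto simp: ins insert_absorb\<close>)
    then show "(\<integral>\<^sup>+us. h (y, ut, us) \<partial>?P) = (\<integral>\<^sup>+x. \<integral>\<^sup>+w. h (y, ut, x(j := w)) \<partial>U \<partial>?PI)"
      by (simp add: ins insert_absorb[OF j])
  qed
  also have "\<dots> = (\<integral>\<^sup>+ut. \<integral>\<^sup>+y. \<integral>\<^sup>+x. \<integral>\<^sup>+w. h (y, ut, x(j := w)) \<partial>U \<partial>?PI \<partial>N \<partial>U)"
  proof -
    have [measurable]: "(\<lambda>x. (snd (fst x))(j := snd x)) \<in> ((N \<Otimes>\<^sub>M U) \<Otimes>\<^sub>M ?PI) \<Otimes>\<^sub>M U \<rightarrow>\<^sub>M ?P"
      by (rule upd_meas[OF j]) auto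
    have m1: "(\<lambda>(y, ut). \<integral>\<^sup>+x. \<integral>\<^sup>+w. h (y, ut, x(j := w)) \<partial>U \<partial>?PI) \<in> borel_measurable (N \<Otimes>\<^sub>M U)"
      by measurable
    show ?thesis using NU.Fubini[OF m1] by simp
  qed
  also have "\<dots> = (\<integral>\<^sup>+ut. \<integral>\<^sup>+x. \<integral>\<^sup>+y. \<integral>\<^sup>+w. h (y, ut, x(j := w)) \<partial>U \<partial>N \<partial>?PI \<partial>U)"
  proof (rule nn_integral_cong)
    fix ut assume utU[measurable]: "ut \<in> space U"
    show "(\<integral>\<^sup>+y. \<integral>\<^sup>+x. \<integral>\<^sup>+w. h (y, ut, x(j := w)) \<partial>U \<partial>?PI \<partial>N) = (\<integral>\<^sup>+x. \<integral>\<^sup>+y. \<integral>\<^sup>+w. h (y, ut, x(j := w)) \<partial>U \<partial>N \<partial>?PI)"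
    proof -
      have [measurable]: "(\<lambda>x. (snd (fst x))(j := snd x)) \<in> (N \<Otimes>\<^sub>M ?PI) \<Otimes>\<^sub>M U \<rightarrow>\<^sub>M ?P"
        by (rule upd_meas[OF j]) auto
      have m2: "(\<lambda>(y, x). \<integral>\<^sup>+w. h (y, ut, x(j := w)) \<partial>U) \<in> borel_measurable (N \<Otimes>\<^sub>M ?PI)"
        by measurable
      show ?thesis using NPI.Fubini[OF m2] by simp
    qed
  qed
  also have "\<dots> = (\<integral>\<^sup>+ut. \<integral>\<^sup>+x. \<integral>\<^sup>+z. h (fst z, ut, x(j := snd z)) \<partial>(N \<Otimes>\<^sub>M U) \<partial>?PI \<partial>U)"
  proof (intro nn_integral_cong)
    fix ut x assume utU[measurable]: "ut \<in> space U" and xP[measurable]: "x \<in> space ?PI"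
    show "(\<integral>\<^sup>+y. \<integral>\<^sup>+w. h (y, ut, x(j := w)) \<partial>U \<partial>N) = (\<integral>\<^sup>+z. h (fst z, ut, x(j := snd z)) \<partial>(N \<Otimes>\<^sub>M U))"
    proof -
      have [measurable]: "(\<lambda>z. x(j := snd z)) \<in> (N \<Otimes>\<^sub>M U) \<rightarrow>\<^sub>M ?P"
        by (rule upd_meas[OF j]) (auto intro: measurable_const xP)
      have mm: "(\<lambda>z. h (fst z, ut, x(j := snd z))) \<in> borel_measurable (N \<Otimes>\<^sub>M U)" by measurable
      show ?thesis using U.nn_integral_fst[OF mm] by simp
    qed
  qed
  finally show ?thesis .
qed


lemma rank_count:
  fixes l :: "nat \<Rightarrow> real" and c :: real
  assumes c: "c \<ge> 0"
  shows "real (card {k \<in> {0..M}. real (card {i \<in> {0..M}. l k \<le> l i}) \<le> c}) \<le> c"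
proof (cases "{k \<in> {0..M}. real (card {i \<in> {0..M}. l k \<le> l i}) \<le> c} = {}")
  case True
  show ?thesis using c unfolding True by simp
next
  case False
  define K where "K = {k \<in> {0..M}. real (card {i \<in> {0..M}. l k \<le> l i}) \<le> c}"
  have fin: "finite K" by (simp add: K_def)
  have ne: "K \<noteq> {}" using False by (simp add: K_def)
  have "Min (l ` K) \<in> l ` K" using fin ne by (intro Min_in) auto
  then obtain k0 where k0K: "k0 \<in> K" and k0m: "l k0 = Min (l ` K)" by auto
  have le: "\<forall>k\<in>K. l k0 \<le> l k" using fin k0m by auto
  have "K \<subseteq> {i \<in> {0..M}. l k0 \<le> l i}" using le by (auto simp: K_def)
  then have "card K \<le> card {i \<in> {0..M}. l k0 \<le> l i}" by (rule card_mono[rotated]) simp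
  moreover have "real (card {i \<in> {0..M}. l k0 \<le> l i}) \<le> c" using k0K by (simp add: K_def)
  ultimately show ?thesis unfolding K_def[symmetric] by linarith
qed

lemma count_shift0:
  fixes l :: "nat \<Rightarrow> real"
  shows "1 + card {j \<in> {1..M}. l 0 \<le> l j} = card {i \<in> {0..M}. l 0 \<le> l i}"
proof -
  have e: "{i \<in> {0..M}. l 0 \<le> l i} = insert 0 {j \<in> {1..M}. l 0 \<le> l j}" by auto
  have "card (insert 0 {j \<in> {1..M}. l 0 \<le> l j}) = Suc (card {j \<in> {1..M}. l 0 \<le> l j})"
    by (rule card_insert_disjoint) auto
  then show ?thesis unfolding e by simp
qed

lemma count_swap:
  fixes l :: "nat \<Rightarrow> real"
  assumes j: "j \<in> {1..M}"
  shows "1 + card {i \<in> {1..M}. l j \<le> (if i = j then l 0 else l i)} = card {i \<in> {0..M}. l j \<le> l i}"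
proof -
  define \<tau> where "\<tau> i = (if i = j then 0 else i)" for i :: nat
  define A where "A = {i \<in> {1..M}. l j \<le> (if i = j then l 0 else l i)}"
  have inj: "inj_on \<tau> A" using j by (auto simp: inj_on_def \<tau>_def A_def)
  have img: "\<tau> ` A = {k \<in> {0..M}. k \<noteq> j \<and> l j \<le> l k}"
  proof
    show "\<tau> ` A \<subseteq> {k \<in> {0..M}. k \<noteq> j \<and> l j \<le> l k}"
      using j by (auto simp: \<tau>_def A_def split: if_splits)
    show "{k \<in> {0..M}. k \<noteq> j \<and> l j \<le> l k} \<subseteq> \<tau> ` A"
    proof
      fix k assume k: "k \<in> {k \<in> {0..M}. k \<noteq> j \<and> l j \<le> l k}"
      show "k \<in> \<tau> ` A"
      proof (cases "k = 0")
        case True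
        then show ?thesis using k j by (intro image_eqI[of _ _ j]) (auto simp: \<tau>_def A_def)
      next
        case False
        then show ?thesis using k j by (intro image_eqI[of _ _ k]) (auto simp: \<tau>_def A_def)
      qed
    qed
  qed
  have "card A = card {k \<in> {0..M}. k \<noteq> j \<and> l j \<le> l k}"
    using card_image[OF inj] img by simp
  moreover have "{i \<in> {0..M}. l j \<le> l i} = insert j {k \<in> {0..M}. k \<noteq> j \<and> l j \<le> l k}"
    using j by auto
  ultimately show ?thesis by (simp add: A_def)
qed


theorem corollary2p3:
  fixes X :: "real^('k::{finite,linorder} + 'p::finite)^'n::finite"
    and beta :: "real^('k + 'p)"
    and sg :: real
    and M :: nat
    and V :: "real^'m::finite^'n"
    and e :: "'k \<Rightarrow> 'm"
    and cv :: "real^'n \<Rightarrow> real"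
    and alpha :: real
  assumes n_ge_d: "CARD('n) \<ge> CARD('k + 'p)"
    and full_rank: "rank X = CARD('k + 'p)"
    and H0: "\<forall>i. beta $ Inl i = 0"
    and sigma_pos: "sg > 0"
    and M_ge: "M \<ge> 1"
    and V_orth: "transpose V ** V = mat 1"
    and V_span: "range (\<lambda>c. V *v c) = {x. \<forall>q. inner (column (Inr q) X) x = 0}"
    and e_inj: "inj e"
    and V_first: "\<forall>i. column (e i) V = Vcol X i"
    and cv_pos: "\<forall>v. cv v > 0"
    and alpha: "0 \<le> alpha" "alpha \<le> 1"
  shows "measure (joint_law (X *v beta) sg M)
           {(y, ut, us) \<in> space (joint_law (X *v beta) sg M).
              mc_pvalue X V e cv M y ut us \<le> alpha} \<le> alpha"
proof -
  interpret vsetup X V using V_orth V_span by unfold_locales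
  have mu_span: "X *v beta \<in> span CC"
  proof -
    have "X *v beta = (\<Sum>i\<in>UNIV. beta $ i *\<^sub>R column i X)"
      by (simp add: matrix_mult_sum scalar_mult_eq_scaleR)
    also have "\<dots> \<in> span CC"
    proof (rule span_sum)
      fix i :: "'k + 'p"
      show "beta $ i *\<^sub>R column i X \<in> span CC"
      proof (cases i)
        case (Inl a) then show ?thesis using H0 by (simp add: span_zero)
      next
        case (Inr q) then show ?thesis
          by (intro span_scale span_base) (auto simp: CC_def)
      qed
    qed
    finally show ?thesis .
  qed
  let ?N = "gauss_vec (X *v beta) sg"
  let ?U = "unif_sphere :: (real^'m) measure"
  let ?I = "{1..M}"
  let ?P = "PiM ?I (\<lambda>_. ?U)"
  let ?J = "joint_law (X *v beta) sg M :: ((real^'n) \<times> (real^'m) \<times> (nat \<Rightarrow> real^'m)) measure"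
  have J: "?J = ?N \<Otimes>\<^sub>M (?U \<Otimes>\<^sub>M ?P)" by (simp add: joint_law_def)
  interpret N: prob_space ?N using sigma_pos by (rule gauss_vec_prob)
  interpret U: prob_space ?U by (rule unif_sphere_prob)
  have probP: "prob_space ?P" by (rule prob_space_PiM) (rule unif_sphere_prob)
  have probUP: "prob_space (?U \<Otimes>\<^sub>M ?P)" by (rule prob_space_pair[OF unif_sphere_prob probP])
  interpret UP: prob_space "?U \<Otimes>\<^sub>M ?P" by (rule probUP)
  have probJ: "prob_space ?J" unfolding J by (rule prob_space_pair[OF N.prob_space_axioms probUP])
  interpret JJ: prob_space ?J by (rule probJ)
  define E where "E = {(y, ut, us) \<in> space ?J. mc_pvalue X V e cv M y ut us \<le> alpha}"
  show ?thesis
  proof (cases "E \<in> sets ?J")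
    case False
    then show ?thesis using alpha by (simp add: measure_notin_sets E_def)
  next
    case True
    define sh where "sh y = norm (transpose V *v y)" for y :: "real^'n"
    define uu where "uu y = (transpose V *v y) /\<^sub>R sh y" for y
    define Lf where "Lf y ut w = Lstat X y (cv (Pp y + sh y *\<^sub>R (V *v ut)))
        (blk1 (group_lasso X (Pp y + sh y *\<^sub>R (V *v ut)) (cv (Pp y + sh y *\<^sub>R (V *v ut)))))
        (\<chi> i. w $ e i)" for y :: "real^'n" and ut w :: "real^'m"
    define l where "l \<omega> i = Lf (fst \<omega>) (fst (snd \<omega>)) (if i = 0 then uu (fst \<omega>) else snd (snd \<omega>) i)" for \<omega> :: "(real^'n) \<times> (real^'m) \<times> (nat \<Rightarrow> real^'m)" and i :: nat
    define Rk where "Rk \<omega> k = card {i \<in> {0..M}. l \<omega> k \<le> l \<omega> i}" for \<omega> :: "(real^'n) \<times> (real^'m) \<times> (nat \<Rightarrow> real^'m)" and k :: nat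
    define T where "T j \<omega> = (if j = 0 then \<omega> else
        (fst (Sm (fst \<omega>, snd (snd \<omega>) j)), fst (snd \<omega>),
         (restrict (snd (snd \<omega>)) (?I - {j}))(j := snd (Sm (fst \<omega>, snd (snd \<omega>) j)))))" for j :: nat and \<omega> :: "(real^'n) \<times> (real^'m) \<times> (nat \<Rightarrow> real^'m)"
    define mc where "mc \<omega> = mc_pvalue X V e cv M (fst \<omega>) (fst (snd \<omega>)) (snd (snd \<omega>))" for \<omega> :: "(real^'n) \<times> (real^'m) \<times> (nat \<Rightarrow> real^'m)"
    define good where "good \<omega> \<longleftrightarrow> transpose V *v fst \<omega> \<noteq> 0 \<and> (\<forall>i\<in>?I. norm (snd (snd \<omega>) i) = 1)" for \<omega> :: "(real^'n) \<times> (real^'m) \<times> (nat \<Rightarrow> real^'m)"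
    have E': "E = {\<omega> \<in> space ?J. mc \<omega> \<le> alpha}" by (auto simp: E_def mc_def)
    have Em[measurable]: "E \<in> sets ?J" by (rule True)
    have mc_gen: "mc_pvalue X V e cv M y ut us
        = (1 + real (card {j \<in> ?I. Lf y ut (uu y) \<le> Lf y ut (us j)})) / (real M + 1)" for y ut us
    proof -
      have "(1 / sighat X y) *\<^sub>R (transpose V *v (y - yhat X y)) = uu y"
        by (simp add: yhat_eq sighat_eq uu_def sh_def matrix_vector_mult_diff_distrib divide_inverse)
      then show ?thesis
        unfolding mc_pvalue_def Let_def Lf_def by (simp add: yhat_eq sighat_eq sh_def)
    qed
    have mc0: "mc \<omega> = real (Rk \<omega> 0) / (real M + 1)" for \<omega>
    proof -
      have "{j \<in> ?I. Lf (fst \<omega>) (fst (snd \<omega>)) (uu (fst \<omega>)) \<le> Lf (fst \<omega>) (fst (snd \<omega>)) (snd (snd \<omega>) j)}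
          = {j \<in> ?I. l \<omega> 0 \<le> l \<omega> j}" by (auto simp: l_def)
      then show ?thesis
        using count_shift0[of M "l \<omega>"] by (simp add: mc_def mc_gen Rk_def)
    qed

    have spJ: "space ?J = UNIV \<times> UNIV \<times> PiE ?I (\<lambda>_. UNIV)"
      by (simp add: J space_pair_measure space_PiM)
    have mcT: "mc (T j \<omega>) = real (Rk \<omega> j) / (real M + 1)"
      if om: "\<omega> \<in> space ?J" and g: "good \<omega>" and j: "j \<in> ?I" for \<omega> j
    proof -
      obtain y ut us where omd: "\<omega> = (y, ut, us)" by (cases \<omega>) auto
      have j0: "j \<noteq> 0" using j by auto
      have s: "sh y > 0" using g omd by (simp add: good_def sh_def)
      have w1: "norm (us j) = 1" using g omd j by (simp add: good_def)
      define y' where "y' = Pp y + sh y *\<^sub>R (V *v us j)"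
      define us' where "us' = (restrict us (?I - {j}))(j := uu y)"
      have Tj: "T j \<omega> = (y', ut, us')"
        using j0 by (simp add: T_def omd Sm_def y'_def us'_def uu_def sh_def)
      have y'2: "y' = Pp y + V *v (sh y *\<^sub>R us j)" by (simp add: y'_def matrix_vector_mult_scaleR)
      have Py': "Pp y' = Pp y" unfolding y'2 by (simp add: Pp_add_V)
      have Vy': "transpose V *v y' = sh y *\<^sub>R us j"
        unfolding y'2 by (simp add: matrix_vector_right_distrib)
      have sh': "sh y' = sh y" using s w1 by (simp add: sh_def Vy')
      have uu': "uu y' = us j" using s by (simp add: uu_def sh' Vy')
      have Lfe: "Lf y' = Lf y"
      proof -
        have "Lstat X y' = Lstat X y"
          by (rule Lstat_inv[OF Py']) (use sh' in \<open>simp add: sh_def\<close>)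
        then show ?thesis by (simp add: Lf_def[abs_def] Py' sh')
      qed
      have "mc (T j \<omega>) = (1 + real (card {i \<in> ?I. Lf y ut (us j) \<le> Lf y ut (us' i)})) / (real M + 1)"
        by (simp add: mc_def Tj mc_gen Lfe uu')
      also have "{i \<in> ?I. Lf y ut (us j) \<le> Lf y ut (us' i)} = {i \<in> ?I. l \<omega> j \<le> (if i = j then l \<omega> 0 else l \<omega> i)}"
        using j0 by (auto simp: us'_def l_def omd)
      finally have eq1: "mc (T j \<omega>) = (1 + real (card {i \<in> ?I. l \<omega> j \<le> (if i = j then l \<omega> 0 else l \<omega> i)})) / (real M + 1)" .
      have "1 + real (card {i \<in> ?I. l \<omega> j \<le> (if i = j then l \<omega> 0 else l \<omega> i)}) = real (Rk \<omega> j)"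
        unfolding Rk_def count_swap[OF j, of "l \<omega>", symmetric] by simp
      then show ?thesis using eq1 by simp
    qed

    have compj: "(\<lambda>us. us j) \<in> ?P \<rightarrow>\<^sub>M ?U" if j: "j \<in> ?I" for j
      using measurable_component_singleton[OF j, of "\<lambda>_. ?U"] by simp
    have Tm: "T j \<in> ?J \<rightarrow>\<^sub>M ?J" if j: "j \<in> {0..M}" for j
    proof (cases "j = 0")
      case True
      then have "T j = (\<lambda>\<omega>. \<omega>)" by (simp add: T_def[abs_def])
      then show ?thesis by simp
    next
      case False
      then have jI: "j \<in> ?I" using j by auto
      have c1[measurable]: "(\<lambda>\<omega>. snd (snd \<omega>) j) \<in> ?J \<rightarrow>\<^sub>M ?U"
        unfolding J by (rule measurable_compose[OF _ compj[OF jI]]) simp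
      have c2: "(\<lambda>\<omega>. restrict (snd (snd \<omega>)) (?I - {j})) \<in> ?J \<rightarrow>\<^sub>M PiM (?I - {j}) (\<lambda>_. ?U)"
        unfolding J by (rule measurable_compose[OF _ measurable_restrict_subset]) auto
      have c3[measurable]: "(\<lambda>\<omega>. (fst \<omega>, snd (snd \<omega>) j)) \<in> ?J \<rightarrow>\<^sub>M (borel \<Otimes>\<^sub>M borel)"
      proof (rule measurable_Pair)
        show "fst \<in> ?J \<rightarrow>\<^sub>M borel" unfolding J by measurable
        show "(\<lambda>\<omega>. snd (snd \<omega>) j) \<in> ?J \<rightarrow>\<^sub>M borel"
          using c1 unfolding measurable_cong_sets[OF refl sets_unif_sphere] .
      qed
      have c4[measurable]: "(\<lambda>\<omega>. snd (Sm (fst \<omega>, snd (snd \<omega>) j))) \<in> ?J \<rightarrow>\<^sub>M ?U"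
        by measurable
      have c5[measurable]: "(\<lambda>\<omega>. (restrict (snd (snd \<omega>)) (?I - {j}))(j := snd (Sm (fst \<omega>, snd (snd \<omega>) j)))) \<in> ?J \<rightarrow>\<^sub>M ?P"
        by (rule upd_meas[OF jI c2 c4])
      have c6[measurable]: "(\<lambda>\<omega>. fst (Sm (fst \<omega>, snd (snd \<omega>) j))) \<in> ?J \<rightarrow>\<^sub>M ?N"
        by measurable
      have c7[measurable]: "(\<lambda>\<omega>. fst (snd \<omega>)) \<in> ?J \<rightarrow>\<^sub>M ?U"
        unfolding J by measurable
      have Teq: "T j = (\<lambda>\<omega>. (fst (Sm (fst \<omega>, snd (snd \<omega>) j)), fst (snd \<omega>),
         (restrict (snd (snd \<omega>)) (?I - {j}))(j := snd (Sm (fst \<omega>, snd (snd \<omega>) j)))))"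
        using False by (simp add: T_def[abs_def])
      have "(\<lambda>\<omega>. (fst (Sm (fst \<omega>, snd (snd \<omega>) j)), fst (snd \<omega>),
         (restrict (snd (snd \<omega>)) (?I - {j}))(j := snd (Sm (fst \<omega>, snd (snd \<omega>) j))))) \<in> ?J \<rightarrow>\<^sub>M ?N \<Otimes>\<^sub>M (?U \<Otimes>\<^sub>M ?P)"
        by (intro measurable_Pair c6 c7 c5)
      then show ?thesis using Teq J by simp
    qed

    have Tinv: "emeasure ?J (T j -` E \<inter> space ?J) = emeasure ?J E" if j: "j \<in> {0..M}" for j
    proof (cases "j = 0")
      case True
      have "T j -` E \<inter> space ?J = E" using sets.sets_into_space[OF Em] True by (auto simp: T_def)
      then show ?thesis by simp
    next
      case False
      then have jI: "j \<in> ?I" using j by auto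
      have Tjm[measurable]: "T j \<in> ?J \<rightarrow>\<^sub>M ?J" by (rule Tm[OF j])
      let ?PI = "PiM (?I - {j}) (\<lambda>_. ?U)"
      have finI: "finite ?I" by simp
      have hm1: "(\<lambda>\<omega>. indicator E (T j \<omega>) :: ennreal) \<in> borel_measurable (?N \<Otimes>\<^sub>M (?U \<Otimes>\<^sub>M ?P))"
        using Tjm Em unfolding J by measurable
      have hm0: "(indicator E :: _ \<Rightarrow> ennreal) \<in> borel_measurable (?N \<Otimes>\<^sub>M (?U \<Otimes>\<^sub>M ?P))"
        using Em unfolding J by measurable
      have "emeasure ?J (T j -` E \<inter> space ?J) = (\<integral>\<^sup>+\<omega>. indicator (T j -` E \<inter> space ?J) \<omega> \<partial>?J)"
        using measurable_sets[OF Tjm Em] by simp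
      also have "\<dots> = (\<integral>\<^sup>+\<omega>. indicator E (T j \<omega>) \<partial>?J)"
        by (rule nn_integral_cong) (simp add: indicator_def)
      also have "\<dots> = (\<integral>\<^sup>+ut. \<integral>\<^sup>+x. \<integral>\<^sup>+z. indicator E (T j (fst z, ut, x(j := snd z))) \<partial>(?N \<Otimes>\<^sub>M ?U) \<partial>?PI \<partial>?U)"
        unfolding J by (rule Q_rearr[OF N.prob_space_axioms U.prob_space_axioms jI finI hm1])
      also have "\<dots> = (\<integral>\<^sup>+ut. \<integral>\<^sup>+x. \<integral>\<^sup>+z. indicator E (fst z, ut, x(j := snd z)) \<partial>(?N \<Otimes>\<^sub>M ?U) \<partial>?PI \<partial>?U)"
      proof (rule nn_integral_cong, rule nn_integral_cong)
        fix ut x assume ut: "ut \<in> space ?U" and x: "x \<in> space ?PI"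
        have xe: "x \<in> extensional (?I - {j})" using x by (simp add: space_PiM PiE_iff)
        have rx: "restrict (x(j := w)) (?I - {j}) = x" for w
          using xe by (auto simp: restrict_def extensional_def fun_eq_iff)
        have Tz: "T j (fst z, ut, x(j := snd z)) = (fst (Sm z), ut, x(j := snd (Sm z)))" for z
          by (simp only: T_def False if_False fst_conv snd_conv rx fun_upd_same prod.collapse)
        have gm1[measurable]: "(\<lambda>z. x(j := snd z)) \<in> (borel \<Otimes>\<^sub>M borel) \<rightarrow>\<^sub>M ?P"
          by (rule upd_meas[OF jI], rule measurable_const[OF x], simp)
        have gm: "(\<lambda>z. indicator E (fst z, ut, x(j := snd z)) :: ennreal) \<in> borel_measurable (borel \<Otimes>\<^sub>M borel)"
          using Em ut unfolding J by measurable
        show "(\<integral>\<^sup>+z. indicator E (T j (fst z, ut, x(j := snd z))) \<partial>(?N \<Otimes>\<^sub>M ?U))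
            = (\<integral>\<^sup>+z. indicator E (fst z, ut, x(j := snd z)) \<partial>(?N \<Otimes>\<^sub>M ?U))"
          unfolding Tz using S_inv[OF mu_span sigma_pos gm] by simp
      qed
      also have "\<dots> = (\<integral>\<^sup>+\<omega>. indicator E \<omega> \<partial>?J)"
        unfolding J by (rule Q_rearr[OF N.prob_space_axioms U.prob_space_axioms jI finI hm0, symmetric])
      also have "\<dots> = emeasure ?J E" using Em by simp
      finally show ?thesis .
    qed

    have AEgood: "AE \<omega> in ?J. good \<omega>"
    proof -
      interpret NW: pair_sigma_finite ?N "?U \<Otimes>\<^sub>M ?P" by unfold_locales
      interpret UPs: pair_sigma_finite ?U ?P
        by (intro pair_sigma_finite.intro U.sigma_finite_measure_axioms prob_space_imp_sigma_finite probP)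
      have AEP: "AE us in ?P. \<forall>i\<in>?I. norm (us i) = 1"
      proof (rule AE_finite_allI)
        fix i assume i: "i \<in> ?I"
        show "AE us in ?P. norm (us i) = 1"
          by (rule AE_PiM_component[OF _ i]) (auto intro: unif_sphere_prob unif_sphere_AE)
      qed simp
      have pm: "{v \<in> space (?U \<Otimes>\<^sub>M ?P). \<forall>i\<in>?I. norm (snd v i) = 1} \<in> sets (?U \<Otimes>\<^sub>M ?P)"
      proof -
        have Ine: "?I \<noteq> {}" using M_ge by auto
        have "{v \<in> space (?U \<Otimes>\<^sub>M ?P). \<forall>i\<in>?I. norm (snd v i) = 1} = (\<Inter>i\<in>?I. (\<lambda>v. snd v i) -` {w. norm w = 1} \<inter> space (?U \<Otimes>\<^sub>M ?P))"
          using Ine by auto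
        also have "\<dots> \<in> sets (?U \<Otimes>\<^sub>M ?P)"
        proof (rule sets.finite_INT)
          fix i assume i: "i \<in> ?I"
          have mi: "(\<lambda>v. snd v i) \<in> (?U \<Otimes>\<^sub>M ?P) \<rightarrow>\<^sub>M ?U"
            by (rule measurable_compose[OF measurable_snd compj[OF i]])
          have "{w::real^'m. norm w = 1} \<in> sets ?U" by simp
          from measurable_sets[OF mi this]
          show "(\<lambda>v. snd v i) -` {w. norm w = 1} \<inter> space (?U \<Otimes>\<^sub>M ?P) \<in> sets (?U \<Otimes>\<^sub>M ?P)" .
        qed (use Ine in auto)
        finally show ?thesis .
      qed
      have AEW: "AE v in ?U \<Otimes>\<^sub>M ?P. \<forall>i\<in>?I. norm (snd v i) = 1"
      proof (rule UPs.AE_pair_measure[OF pm], rule AE_I2)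
        fix ut
        show "AE us in ?P. \<forall>i\<in>?I. norm (snd (ut, us) i) = 1" unfolding snd_conv by (rule AEP)
      qed
      have gm: "{\<omega> \<in> space (?N \<Otimes>\<^sub>M (?U \<Otimes>\<^sub>M ?P)). good \<omega>} \<in> sets (?N \<Otimes>\<^sub>M (?U \<Otimes>\<^sub>M ?P))"
      proof -
        have "{\<omega> \<in> space (?N \<Otimes>\<^sub>M (?U \<Otimes>\<^sub>M ?P)). good \<omega>}
            = ((\<lambda>\<omega>. transpose V *v fst \<omega>) -` (UNIV - {0}) \<inter> space (?N \<Otimes>\<^sub>M (?U \<Otimes>\<^sub>M ?P)))
              \<inter> (snd -` {v \<in> space (?U \<Otimes>\<^sub>M ?P). \<forall>i\<in>?I. norm (snd v i) = 1} \<inter> space (?N \<Otimes>\<^sub>M (?U \<Otimes>\<^sub>M ?P)))"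
          by (auto simp: good_def space_pair_measure)
        also have "\<dots> \<in> sets (?N \<Otimes>\<^sub>M (?U \<Otimes>\<^sub>M ?P))"
        proof (rule sets.Int)
          show "(\<lambda>\<omega>. transpose V *v fst \<omega>) -` (UNIV - {0}) \<inter> space (?N \<Otimes>\<^sub>M (?U \<Otimes>\<^sub>M ?P)) \<in> sets (?N \<Otimes>\<^sub>M (?U \<Otimes>\<^sub>M ?P))"
            by (rule measurable_sets[where A=borel]) auto
          show "snd -` {v \<in> space (?U \<Otimes>\<^sub>M ?P). \<forall>i\<in>?I. norm (snd v i) = 1} \<inter> space (?N \<Otimes>\<^sub>M (?U \<Otimes>\<^sub>M ?P)) \<in> sets (?N \<Otimes>\<^sub>M (?U \<Otimes>\<^sub>M ?P))"
            by (rule measurable_sets[OF measurable_snd pm])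
        qed
        finally show ?thesis .
      qed
      have "AE \<omega> in ?N \<Otimes>\<^sub>M (?U \<Otimes>\<^sub>M ?P). good \<omega>"
      proof (rule NW.AE_pair_measure[OF gm])
        show "AE y in ?N. AE v in ?U \<Otimes>\<^sub>M ?P. good (y, v)"
          using AE_Vt_nz[OF mu_span sigma_pos]
        proof (rule AE_mp)
          show "AE y in ?N. transpose V *v y \<noteq> 0 \<longrightarrow> (AE v in ?U \<Otimes>\<^sub>M ?P. good (y, v))"
            using AEW by (auto simp: good_def elim: AE_mp)
        qed
      qed
      then show ?thesis unfolding J .
    qed

    define c where "c = alpha * (real M + 1)"
    have c0: "c \<ge> 0" using alpha by (simp add: c_def)
    have Tsp: "T j \<omega> \<in> space ?J" if "\<omega> \<in> space ?J" "j \<in> {0..M}" for j \<omega>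
      using measurable_space[OF Tm[OF that(2)] that(1)] .
    have memE: "T j \<omega> \<in> E \<longleftrightarrow> real (Rk \<omega> j) \<le> c"
      if om: "\<omega> \<in> space ?J" and g: "good \<omega>" and j: "j \<in> {0..M}" for \<omega> j
    proof -
      have mcj: "mc (T j \<omega>) = real (Rk \<omega> j) / (real M + 1)"
      proof (cases "j = 0")
        case True then show ?thesis by (simp add: T_def mc0)
      next
        case False then show ?thesis using mcT[OF om g] j by auto
      qed
      have "T j \<omega> \<in> E \<longleftrightarrow> mc (T j \<omega>) \<le> alpha" using Tsp[OF om j] by (simp add: E')
      also have "\<dots> \<longleftrightarrow> real (Rk \<omega> j) \<le> c"
        by (simp add: mcj c_def pos_divide_le_eq add_pos_nonneg)
      finally show ?thesis .
    qed
    have pw: "(\<Sum>j\<in>{0..M}. indicator (T j -` E \<inter> space ?J) \<omega>) \<le> ennreal c"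
      if om: "\<omega> \<in> space ?J" and g: "good \<omega>" for \<omega>
    proof -
      have "(\<Sum>j\<in>{0..M}. indicator (T j -` E \<inter> space ?J) \<omega> :: ennreal)
          = (\<Sum>j\<in>{0..M}. indicator {k. real (Rk \<omega> k) \<le> c} j)"
        by (rule sum.cong) (auto simp: indicator_def memE[OF om g] om)
      also have "\<dots> = of_nat (card ({0..M} \<inter> {k. real (Rk \<omega> k) \<le> c}))"
        by (simp add: indicator_def sum.If_cases)
      also have "{0..M} \<inter> {k. real (Rk \<omega> k) \<le> c} = {k \<in> {0..M}. real (card {i \<in> {0..M}. l \<omega> k \<le> l \<omega> i}) \<le> c}"
        by (auto simp: Rk_def)
      also have "(of_nat (card \<dots>) :: ennreal) \<le> ennreal c"
        using rank_count[OF c0, of M "l \<omega>"] by (simp add: ennreal_of_nat_eq_real_of_nat ennreal_leI)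
      finally show ?thesis .
    qed
    have cnt: "AE \<omega> in ?J. (\<Sum>j\<in>{0..M}. indicator (T j -` E \<inter> space ?J) \<omega>) \<le> ennreal c"
      using AEgood
    proof (rule AE_mp)
      show "AE \<omega> in ?J. good \<omega> \<longrightarrow> (\<Sum>j\<in>{0..M}. indicator (T j -` E \<inter> space ?J) \<omega>) \<le> ennreal c"
        using pw by (intro AE_I2) auto
    qed
    have Tset: "T j -` E \<inter> space ?J \<in> sets ?J" if "j \<in> {0..M}" for j
      using measurable_sets[OF Tm[OF that] Em] .
    have "of_nat (M + 1) * emeasure ?J E = (\<Sum>j\<in>{0..M}. emeasure ?J (T j -` E \<inter> space ?J))"
      by (simp add: Tinv)
    also have "\<dots> = (\<Sum>j\<in>{0..M}. \<integral>\<^sup>+\<omega>. indicator (T j -` E \<inter> space ?J) \<omega> \<partial>?J)"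
      by (rule sum.cong) (simp_all add: Tset)
    also have "\<dots> = (\<integral>\<^sup>+\<omega>. (\<Sum>j\<in>{0..M}. indicator (T j -` E \<inter> space ?J) \<omega>) \<partial>?J)"
      by (rule nn_integral_sum[symmetric]) (rule borel_measurable_indicator, rule Tset, simp)
    also have "\<dots> \<le> (\<integral>\<^sup>+\<omega>. ennreal c \<partial>?J)"
      by (rule nn_integral_mono_AE[OF cnt])
    also have "\<dots> = ennreal c" using JJ.emeasure_space_1 by simp
    finally have le: "of_nat (M + 1) * emeasure ?J E \<le> ennreal c" .
    have "of_nat (M + 1) * emeasure ?J E = ennreal ((real M + 1) * measure ?J E)"
      by (simp add: JJ.emeasure_eq_measure ennreal_of_nat_eq_real_of_nat ennreal_mult add.commute)
    with le have "(real M + 1) * measure ?J E \<le> c" using c0 by (simp add: ennreal_le_iff)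
    then have "measure ?J E \<le> alpha" by (simp add: c_def mult.commute)
    then show ?thesis by (simp add: E_def)

  qed
qed


end
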